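(* Assume there are constants $\gamma_t\ge 0$ ($t=0,\dots,T-1$) with $|C_t(x)-C_t(y)|\le\gamma_t|x-y|$ for all $x,y$. For every $t=0,1,\dots,T-2$ and every $x$ with $z_{k-1}<x\le z_k$, $z_k\in Z_\theta$, one has $\alpha A_{t+1}(x)\le 2\bar\psi_t(\theta,z_k)-2\gamma_t\theta$.
   Context: Model. Fix an integer horizon $T\ge 2$, a discount factor $\alpha\in(0,1]$, and for $t=0,\dots,T-1$: unit ordering costs $c_t\in\mathbb R$, a salvage coefficient $c_T\in\mathbb R$, setup costs $K_t\ge 0$, functions $G_t:\mathbb R\to\mathbb R$, and independent nonnegative random demands $D_0,\dots,D_{T-1}$ with right-continuous distribution functions $F_t$ and finite means; all expectations appearing are assumed finite. Put $C_t(y)=(c_t-\alpha c_{t+1})y+G_t(y)+\alpha c_{t+1}E[D_t]$. Standing assumptions: (i) each $C_t$ is convex with $C_t(y)\to+\infty$ as $|y|\to\infty$; (ii) $K_t\ge \alpha K_{t+1}$ for $t=0,\dots,T-2$. Grid construction. Fix $\theta>0$, $z_m=m\theta$, $Z_\theta=\{z_m:m\in\mathbb Z\}$, $f_t(n)=F_t(z_{n+1})-F_t(z_n)$ ($n\ge -1$). $C^m_t=\min\{y: C_t(y)=\min_x C_t(x)\}$; with $z_{n_0}<C^m_t\le z_{n_0+1}$, $S^U_t=\min\{z_m\in Z_\theta: z_m\ge C^m_t,\ C_t(z_m)>C_t(z_{n_0})+K_t\}$. $s_{T-1}$ is a point with $s_{T-1}\le C^m_{T-1}$, $C_{T-1}(s_{T-1})=C_{T-1}(C^m_{T-1})+K_{T-1}$;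 $\bar I_{T-1}=s_{T-1}$. For $t=T-2,\dots,0$: $I_t=\max\{z_m\in Z_\theta: z_m<\min(\bar I_{t+1}-\theta,C^m_t)\}$, $\bar I_t=\max\{z_m\in Z_\theta: z_m\le I_t,\ C_t(z_m)>C_t(I_t)+K_t\}+\theta$. $H_{T-1}=C_{T-1}$, $S_{T-1}=C^m_{T-1}$; $V_t(y)=H_t(S_t)+K_t$ for $y<s_t$, $V_t(y)=H_t(y)$ for $y\ge s_t$. For $t=T-2,\dots,0$: $H_t(y)=C_t(y)+\alpha\sum_{n=-1}^\infty V_{t+1}(y-z_n)f_t(n)$; $S_t=\max\{z_m\in Z_\theta: I_t\le z_m\le S^U_t,\ H_t(z_m)=\min\{H_t(z_n):z_n\in Z_\theta, I_t\le z_n\le S^U_t\}\}$; $s_t=S_t$ if $K_t=0$, else $s_t=\min\{z_m\in Z_\theta:\bar I_t\le z_m\le S_t,\ H_t(z_m)\le H_t(S_t)+K_t\}$. For $t=1,\dots,T-1$, $A_t(x)=E[V_t(x-D_{t-1})]-\sum_{n=-1}^{\infty}V_t(x-z_n)f_{t-1}(n)$. Upper estimate functions. $\bar\psi_{T-1}(x,y)=\gamma_{T-1}x$; $\bar\varphi_{T-1}(x,y)=0$ if $y<s_{T-1}$ and $=\gamma_{T-1}x$ if $y\ge s_{T-1}$. For $t=0,\dots,T-2$, with $n$ the integer such that $z_{n-1}\le y-s_{t+1}<z_n$: $\bar\psi_t(x,y)=\gamma_tx$ if $y<s_{t+1}-\theta$, else $\bar\psi_t(x,y)=\gamma_tx+\alpha\sum_{m=-1}^{n-1}\bar\varphi_{t+1}(x,y-z_m)f_t(m)$;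 $\bar\varphi_t(x,y)=0$ if $y<s_t$, $=\bar\psi_t(y-s_t+\theta,y)$ if $y\ge s_t$ and $y-x<s_t$, $=\bar\psi_t(x,y)$ if $y\ge s_t$ and $y-x\ge s_t$. *)

theory Defs
  imports "HOL-Probability.Probability"
begin

record 'a invmodel =
  hor    :: nat
  disc   :: real
  cost   :: "nat \<Rightarrow> real"
  setupK  :: "nat \<Rightarrow> real"
  Gf     :: "nat \<Rightarrow> real \<Rightarrow> real"
  pspace :: "'a measure"
  dem    :: "nat \<Rightarrow> 'a \<Rightarrow> real"

definition zg :: "real \<Rightarrow> int \<Rightarrow> real" where
  "zg \<theta> m = real_of_int m * \<theta>"

definition Fd :: "'a invmodel \<Rightarrow> nat \<Rightarrow> real \<Rightarrow> real" where
  "Fd P t x = measure (pspace P) {\<omega> \<in> space (pspace P). dem P t \<omega> \<le> x}"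

definition fg :: "'a invmodel \<Rightarrow> real \<Rightarrow> nat \<Rightarrow> int \<Rightarrow> real" where
  "fg P \<theta> t n = Fd P t (zg \<theta> (n + 1)) - Fd P t (zg \<theta> n)"

definition Cf :: "'a invmodel \<Rightarrow> nat \<Rightarrow> real \<Rightarrow> real" where
  "Cf P t y = (cost P t - disc P * cost P (Suc t)) * y + Gf P t y
      + disc P * cost P (Suc t) * (\<integral>\<omega>. dem P t \<omega> \<partial>pspace P)"

definition Cm :: "'a invmodel \<Rightarrow> nat \<Rightarrow> real" where
  "Cm P t = Inf {y. \<forall>x. Cf P t y \<le> Cf P t x}"

definition n0 :: "'a invmodel \<Rightarrow> real \<Rightarrow> nat \<Rightarrow> int" where
  "n0 P \<theta> t = (THE n. zg \<theta> n < Cm P t \<and> Cm P t \<le> zg \<theta> (n + 1))"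

definition SU :: "'a invmodel \<Rightarrow> real \<Rightarrow> nat \<Rightarrow> real" where
  "SU P \<theta> t = Inf {zg \<theta> m | m. Cm P t \<le> zg \<theta> m \<and>
        Cf P t (zg \<theta> m) > Cf P t (zg \<theta> (n0 P \<theta> t)) + setupK P t}"

definition sT :: "'a invmodel \<Rightarrow> real" where
  "sT P = (THE s. s \<le> Cm P (hor P - 1) \<and>
      Cf P (hor P - 1) s = Cf P (hor P - 1) (Cm P (hor P - 1)) + setupK P (hor P - 1))"

text \<open>I_t computed from a given value b = bar I_{t+1}.\<close>
definition Ifrom :: "'a invmodel \<Rightarrow> real \<Rightarrow> nat \<Rightarrow> real \<Rightarrow> real" where
  "Ifrom P \<theta> t b = Sup {zg \<theta> m | m. zg \<theta> m < min (b - \<theta>) (Cm P t)}"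

definition Ibarfrom :: "'a invmodel \<Rightarrow> real \<Rightarrow> nat \<Rightarrow> real \<Rightarrow> real" where
  "Ibarfrom P \<theta> t I = Sup {zg \<theta> m | m. zg \<theta> m \<le> I \<and> Cf P t (zg \<theta> m) > Cf P t I + setupK P t} + \<theta>"

text \<open>Backward recursion: Ibar_aux j = bar I_{T-1-j}.\<close>
primrec Ibar_aux :: "'a invmodel \<Rightarrow> real \<Rightarrow> nat \<Rightarrow> real" where
  "Ibar_aux P \<theta> 0 = sT P"
| "Ibar_aux P \<theta> (Suc j) =
     (let t = hor P - 2 - j in Ibarfrom P \<theta> t (Ifrom P \<theta> t (Ibar_aux P \<theta> j)))"

definition Ibar :: "'a invmodel \<Rightarrow> real \<Rightarrow> nat \<Rightarrow> real" where
  "Ibar P \<theta> t = Ibar_aux P \<theta> (hor P - 1 - t)"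

definition Iv :: "'a invmodel \<Rightarrow> real \<Rightarrow> nat \<Rightarrow> real" where
  "Iv P \<theta> t = Ifrom P \<theta> t (Ibar P \<theta> (Suc t))"

definition Vfrom :: "(real \<Rightarrow> real) \<Rightarrow> real \<Rightarrow> real \<Rightarrow> real \<Rightarrow> real \<Rightarrow> real" where
  "Vfrom H S s K y = (if y < s then H S + K else H y)"

text \<open>Backward recursion: HSs_aux j = (H_t, S_t, s_t) with t = T-1-j.
  The series sum_{n=-1}^infty is written as a series over m :: nat with n = m - 1.\<close>
primrec HSs_aux :: "'a invmodel \<Rightarrow> real \<Rightarrow> nat \<Rightarrow> (real \<Rightarrow> real) \<times> real \<times> real" where
  "HSs_aux P \<theta> 0 = (Cf P (hor P - 1), Cm P (hor P - 1), sT P)"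
| "HSs_aux P \<theta> (Suc j) =
    (case HSs_aux P \<theta> j of (H', S', s') \<Rightarrow>
      (let t = hor P - 2 - j;
           V' = Vfrom H' S' s' (setupK P (Suc t));
           H = (\<lambda>y. Cf P t y + disc P *
                 (\<Sum>m. V' (y - zg \<theta> (int m - 1)) * fg P \<theta> t (int m - 1)));
           I = Iv P \<theta> t;
           U = SU P \<theta> t;
           S = Sup {zg \<theta> m | m. I \<le> zg \<theta> m \<and> zg \<theta> m \<le> U \<and>
                  (\<forall>n. I \<le> zg \<theta> n \<and> zg \<theta> n \<le> U \<longrightarrow> H (zg \<theta> m) \<le> H (zg \<theta> n))};
           s = (if setupK P t = 0 then S
                else Inf {zg \<theta> m | m. Ibar P \<theta> t \<le> zg \<theta> m \<and> zg \<theta> m \<le> S \<and>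
                           H (zg \<theta> m) \<le> H S + setupK P t})
       in (H, S, s)))"

definition Hf :: "'a invmodel \<Rightarrow> real \<Rightarrow> nat \<Rightarrow> real \<Rightarrow> real" where
  "Hf P \<theta> t = fst (HSs_aux P \<theta> (hor P - 1 - t))"

definition Sv :: "'a invmodel \<Rightarrow> real \<Rightarrow> nat \<Rightarrow> real" where
  "Sv P \<theta> t = fst (snd (HSs_aux P \<theta> (hor P - 1 - t)))"

definition sv :: "'a invmodel \<Rightarrow> real \<Rightarrow> nat \<Rightarrow> real" where
  "sv P \<theta> t = snd (snd (HSs_aux P \<theta> (hor P - 1 - t)))"

definition Vf :: "'a invmodel \<Rightarrow> real \<Rightarrow> nat \<Rightarrow> real \<Rightarrow> real" where
  "Vf P \<theta> t = Vfrom (Hf P \<theta> t) (Sv P \<theta> t) (sv P \<theta> t) (setupK P t)"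

definition Af :: "'a invmodel \<Rightarrow> real \<Rightarrow> nat \<Rightarrow> real \<Rightarrow> real" where
  "Af P \<theta> t x = (\<integral>\<omega>. Vf P \<theta> t (x - dem P (t - 1) \<omega>) \<partial>pspace P)
      - (\<Sum>m. Vf P \<theta> t (x - zg \<theta> (int m - 1)) * fg P \<theta> (t - 1) (int m - 1))"

text \<open>bar psi_t computed from bar phi_{t+1} (t \<le> T-2).\<close>
definition psifrom :: "'a invmodel \<Rightarrow> real \<Rightarrow> (nat \<Rightarrow> real) \<Rightarrow> nat
     \<Rightarrow> (real \<Rightarrow> real \<Rightarrow> real) \<Rightarrow> real \<Rightarrow> real \<Rightarrow> real" where
  "psifrom P \<theta> \<gamma> t \<phi> x y =
    (if y < sv P \<theta> (Suc t) - \<theta> then \<gamma> t * x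
     else \<gamma> t * x + disc P *
       (\<Sum>m \<in> {-1 .. (THE n. zg \<theta> (n - 1) \<le> y - sv P \<theta> (Suc t) \<and>
                                y - sv P \<theta> (Suc t) < zg \<theta> n) - 1}.
           \<phi> x (y - zg \<theta> m) * fg P \<theta> t m))"

text \<open>bar phi_t computed from bar psi_t (t \<le> T-2).\<close>
definition phifrom :: "real \<Rightarrow> real \<Rightarrow> (real \<Rightarrow> real \<Rightarrow> real) \<Rightarrow> real \<Rightarrow> real \<Rightarrow> real" where
  "phifrom \<theta> st \<psi> x y =
    (if y < st then 0 else if y - x < st then \<psi> (y - st + \<theta>) y else \<psi> x y)"

text \<open>Backward recursion: phi_aux j = bar phi_{T-1-j}.\<close>
primrec phi_aux :: "'a invmodel \<Rightarrow> real \<Rightarrow> (nat \<Rightarrow> real) \<Rightarrow> nat \<Rightarrow> real \<Rightarrow> real \<Rightarrow> real" where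
  "phi_aux P \<theta> \<gamma> 0 =
     (\<lambda>x y. if y < sv P \<theta> (hor P - 1) then 0 else \<gamma> (hor P - 1) * x)"
| "phi_aux P \<theta> \<gamma> (Suc j) =
     (let t = hor P - 2 - j in
        phifrom \<theta> (sv P \<theta> t) (psifrom P \<theta> \<gamma> t (phi_aux P \<theta> \<gamma> j)))"

definition phibar :: "'a invmodel \<Rightarrow> real \<Rightarrow> (nat \<Rightarrow> real) \<Rightarrow> nat \<Rightarrow> real \<Rightarrow> real \<Rightarrow> real" where
  "phibar P \<theta> \<gamma> t = phi_aux P \<theta> \<gamma> (hor P - 1 - t)"

definition psibar :: "'a invmodel \<Rightarrow> real \<Rightarrow> (nat \<Rightarrow> real) \<Rightarrow> nat \<Rightarrow> real \<Rightarrow> real \<Rightarrow> real" where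
  "psibar P \<theta> \<gamma> t = (if hor P - 1 \<le> t then (\<lambda>x y. \<gamma> t * x)
                       else psifrom P \<theta> \<gamma> t (phibar P \<theta> \<gamma> (Suc t)))"

end

theory Submission
  imports Defs
begin


lemma zg_add: "zg \<theta> (a + b) = zg \<theta> a + zg \<theta> b" by (simp add: zg_def algebra_simps)
lemma zg_diff: "zg \<theta> (a - b) = zg \<theta> a - zg \<theta> b" by (simp add: zg_def algebra_simps)
lemma zg_le_iff: "0 < \<theta> \<Longrightarrow> zg \<theta> a \<le> zg \<theta> b \<longleftrightarrow> a \<le> b" by (simp add: zg_def)
lemma zg_less_iff: "0 < \<theta> \<Longrightarrow> zg \<theta> a < zg \<theta> b \<longleftrightarrow> a < b" by (simp add: zg_def)
lemma zg_eq_iff: "0 < \<theta> \<Longrightarrow> zg \<theta> a = zg \<theta> b \<longleftrightarrow> a = b" by (simp add: zg_def)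
lemma zg_1: "zg \<theta> 1 = \<theta>" "zg \<theta> 0 = 0" by (simp_all add: zg_def)
lemma zg_plus1: "zg \<theta> (a + 1) = zg \<theta> a + \<theta>" "zg \<theta> (a - 1) = zg \<theta> a - \<theta>"
  by (simp_all add: zg_def algebra_simps)

lemma int_greatest:
  fixes Q :: "int \<Rightarrow> bool"
  assumes "Q m0" "\<And>m. Q m \<Longrightarrow> m \<le> B"
  shows "\<exists>m. Q m \<and> (\<forall>n. Q n \<longrightarrow> n \<le> m)"
proof -
  let ?S = "{m. Q m \<and> m0 \<le> m}"
  have fin: "finite ?S" by (rule finite_subset[of _ "{m0..B}"]) (use assms in auto)
  have ne: "?S \<noteq> {}" using assms by auto
  have "Max ?S \<in> ?S" using fin ne by (rule Max_in)
  moreover have "\<forall>n. Q n \<longrightarrow> n \<le> Max ?S"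
  proof (intro allI impI)
    fix n assume "Q n"
    show "n \<le> Max ?S"
    proof (cases "m0 \<le> n")
      case True thus ?thesis using fin \<open>Q n\<close> by (intro Max_ge) auto
    next
      case False thus ?thesis using \<open>Max ?S \<in> ?S\<close> by auto
    qed
  qed
  ultimately show ?thesis by blast
qed

lemma int_least:
  fixes Q :: "int \<Rightarrow> bool"
  assumes "Q m0" "\<And>m. Q m \<Longrightarrow> B \<le> m"
  shows "\<exists>m. Q m \<and> (\<forall>n. Q n \<longrightarrow> m \<le> n)"
proof -
  obtain m where "Q (- m)" "\<forall>n. Q (- n) \<longrightarrow> n \<le> m"
    using int_greatest[of "\<lambda>m. Q (- m)" "- m0" "- B"] assms by fastforce
  thus ?thesis by (intro exI[of _ "-m"]) (metis minus_minus neg_le_iff_le)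
qed

lemma grid_sup:
  assumes th: "0 < \<theta>" and "Q m0" and "\<And>m. Q m \<Longrightarrow> zg \<theta> m \<le> B"
  shows "\<exists>m. Q m \<and> Sup {zg \<theta> m | m. Q m} = zg \<theta> m \<and> (\<forall>n. Q n \<longrightarrow> n \<le> m)"
proof -
  have "\<And>m. Q m \<Longrightarrow> m \<le> \<lceil>B / \<theta>\<rceil>"
  proof -
    fix m assume "Q m"
    hence "real_of_int m * \<theta> \<le> B" using assms(3) by (simp add: zg_def)
    hence "real_of_int m \<le> B / \<theta>" using th by (simp add: field_simps)
    thus "m \<le> \<lceil>B / \<theta>\<rceil>" by linarith
  qed
  then obtain m where m: "Q m" "\<forall>n. Q n \<longrightarrow> n \<le> m" using int_greatest[of Q m0] assms(2) by blast
  have "Sup {zg \<theta> m | m. Q m} = zg \<theta> m"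
    by (rule cSup_eq_maximum) (use m th in \<open>auto simp: zg_le_iff\<close>)
  thus ?thesis using m by blast
qed

lemma grid_inf:
  assumes th: "0 < \<theta>" and "Q m0" and "\<And>m. Q m \<Longrightarrow> B \<le> zg \<theta> m"
  shows "\<exists>m. Q m \<and> Inf {zg \<theta> m | m. Q m} = zg \<theta> m \<and> (\<forall>n. Q n \<longrightarrow> m \<le> n)"
proof -
  have "\<And>m. Q m \<Longrightarrow> \<lfloor>B / \<theta>\<rfloor> \<le> m"
  proof -
    fix m assume "Q m"
    hence "B \<le> real_of_int m * \<theta>" using assms(3) by (simp add: zg_def)
    hence "B / \<theta> \<le> real_of_int m" using th by (simp add: field_simps)
    thus "\<lfloor>B / \<theta>\<rfloor> \<le> m" by linarith
  qed
  then obtain m where m: "Q m" "\<forall>n. Q n \<longrightarrow> m \<le> n" using int_least[of Q m0] assms(2) by blast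
  have "Inf {zg \<theta> m | m. Q m} = zg \<theta> m"
    by (rule cInf_eq_minimum) (use m th in \<open>auto simp: zg_le_iff\<close>)
  thus ?thesis using m by blast
qed

lemma HSs_step:
  assumes "Suc u < hor P"
  shows "HSs_aux P \<theta> (hor P - 1 - u) =
    (let V' = Vf P \<theta> (Suc u);
         H = (\<lambda>y. Cf P u y + disc P * (\<Sum>m. V' (y - zg \<theta> (int m - 1)) * fg P \<theta> u (int m - 1)));
         S = Sup {zg \<theta> m | m. Iv P \<theta> u \<le> zg \<theta> m \<and> zg \<theta> m \<le> SU P \<theta> u \<and>
                  (\<forall>n. Iv P \<theta> u \<le> zg \<theta> n \<and> zg \<theta> n \<le> SU P \<theta> u \<longrightarrow> H (zg \<theta> m) \<le> H (zg \<theta> n))}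
     in (H, S, if setupK P u = 0 then S
                else Inf {zg \<theta> m | m. Ibar P \<theta> u \<le> zg \<theta> m \<and> zg \<theta> m \<le> S \<and>
                           H (zg \<theta> m) \<le> H S + setupK P u}))"
proof -
  have e: "hor P - 1 - u = Suc (hor P - 2 - u)" using assms by arith
  have e2: "hor P - 2 - (hor P - 2 - u) = u" using assms by arith
  have e3: "hor P - 2 - u = hor P - 1 - Suc u" by arith
  show ?thesis unfolding e
    apply (simp only: HSs_aux.simps e2 Let_def)
    apply (simp add: Vf_def Hf_def Sv_def sv_def e3 split: prod.split)
    done
qed
lemma coer_bound:
  fixes f :: "real \<Rightarrow> real"
  assumes "filterlim f at_top at_infinity"
  shows "\<exists>R>0. \<forall>x. R \<le> \<bar>x\<bar> \<longrightarrow> B \<le> f x"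
proof -
  have "eventually (\<lambda>x. B \<le> f x) at_infinity" using assms by (simp add: filterlim_at_top)
  then obtain b where b: "\<forall>x. b \<le> norm x \<longrightarrow> B \<le> f x" by (auto simp: eventually_at_infinity)
  show ?thesis by (rule exI[of _ "max b 1"]) (use b in auto)
qed

lemma lip_cont:
  fixes f :: "real \<Rightarrow> real"
  assumes "\<forall>u v. \<bar>f u - f v\<bar> \<le> g * \<bar>u - v\<bar>" "0 \<le> g"
  shows "continuous_on S f"
proof -
  have "g-lipschitz_on S f"
    by (rule lipschitz_onI) (use assms in \<open>auto simp: dist_real_def\<close>)
  thus ?thesis by (rule lipschitz_on_continuous_on)
qed

lemma cvx_fun:
  fixes f :: "real \<Rightarrow> real"
  assumes conv: "convex_on UNIV f" and coer: "filterlim f at_top at_infinity"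
    and lip: "\<forall>u v. \<bar>f u - f v\<bar> \<le> g * \<bar>u - v\<bar>" "0 \<le> g"
  defines "cm \<equiv> Inf {y. \<forall>x. f y \<le> f x}"
  shows "\<forall>x. f cm \<le> f x" "\<forall>a b. a < b \<and> b \<le> cm \<longrightarrow> f b < f a"
proof -
  have cont: "\<And>S. continuous_on S f" using lip_cont[OF lip] .
  obtain R where R: "R > 0" "\<forall>x. R \<le> \<bar>x\<bar> \<longrightarrow> f 0 + 1 \<le> f x" using coer_bound[OF coer] by blast
  obtain x0 where x0: "x0 \<in> cball 0 R" "\<forall>y\<in>cball 0 R. f x0 \<le> f y"
    using continuous_attains_inf[of "cball (0::real) R" f] cont R(1) by auto
  have x0min: "\<forall>x. f x0 \<le> f x"
  proof
    fix x show "f x0 \<le> f x"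
    proof (cases "\<bar>x\<bar> \<le> R")
      case True thus ?thesis using x0 by (auto simp: dist_real_def)
    next
      case False
      hence "f 0 + 1 \<le> f x" using R by auto
      moreover have "f x0 \<le> f 0" using x0 R(1) by auto
      ultimately show ?thesis by linarith
    qed
  qed
  let ?M = "{y. \<forall>x. f y \<le> f x}"
  have ne: "?M \<noteq> {}" using x0min by blast
  have bdd: "bdd_below ?M"
  proof (rule bdd_belowI[of _ "-R"])
    fix y assume "y \<in> ?M"
    hence "f y \<le> f 0" by auto
    hence "\<not> R \<le> \<bar>y\<bar>" using R by force
    thus "-R \<le> y" by auto
  qed
  have cl: "closed ?M"
  proof -
    have "?M = (\<Inter>x. {y. f y \<le> f x})" by auto
    moreover have "\<And>x. closed {y. f y \<le> f x}"
      by (rule closed_Collect_le) (use cont in \<open>auto intro: continuous_on_const\<close>)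
    ultimately show ?thesis by auto
  qed
  have cmM: "cm \<in> ?M" unfolding cm_def by (rule closed_contains_Inf[OF ne bdd cl])
  thus "\<forall>x. f cm \<le> f x" by auto
  have lt: "\<And>y. y < cm \<Longrightarrow> f cm < f y"
  proof -
    fix y assume "y < cm"
    hence "y \<notin> ?M" unfolding cm_def using cInf_lower[OF _ bdd, of y] by force
    then obtain x where "f x < f y" by (auto simp: not_le)
    moreover have "f cm \<le> f x" using cmM by auto
    ultimately show "f cm < f y" by linarith
  qed
  show "\<forall>a b. a < b \<and> b \<le> cm \<longrightarrow> f b < f a"
  proof (intro allI impI)
    fix a b assume ab: "a < b \<and> b \<le> cm"
    show "f b < f a"
    proof (cases "b = cm")
      case True thus ?thesis using lt ab by auto
    next
      case False
      hence bc: "b < cm" using ab by auto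
      define l where "l = (cm - b) / (cm - a)"
      have l: "0 < l" "l < 1" using ab bc by (auto simp: l_def field_simps)
      have ne0: "cm - a \<noteq> 0" using ab bc by auto
      have "l * a + (1 - l) * cm = cm - l * (cm - a)" by (simp add: algebra_simps)
      also have "\<dots> = b" using ne0 by (simp add: l_def)
      finally have bl: "b = l * a + (1 - l) * cm" by simp
      have "f b \<le> l * f a + (1 - l) * f cm"
        using convex_onD[OF conv, of "1 - l" a cm] l unfolding bl by simp
      also have "\<dots> < l * f a + (1 - l) * f a" using lt[of a] ab l by auto
      finally show ?thesis by (simp add: algebra_simps)
    qed
  qed
qed

lemma cvx_sT:
  fixes f :: "real \<Rightarrow> real"
  assumes conv: "convex_on UNIV f" and coer: "filterlim f at_top at_infinity"
    and lip: "\<forall>u v. \<bar>f u - f v\<bar> \<le> g * \<bar>u - v\<bar>" "0 \<le> g" and K: "0 \<le> K"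
  defines "cm \<equiv> Inf {y. \<forall>x. f y \<le> f x}"
  shows "\<exists>!s. s \<le> cm \<and> f s = f cm + K"
proof -
  note cv = cvx_fun[OF conv coer lip, folded cm_def]
  have cont: "\<And>S. continuous_on S f" using lip_cont[OF lip] .
  obtain R where R: "R > 0" "\<forall>x. R \<le> \<bar>x\<bar> \<longrightarrow> f cm + K \<le> f x" using coer_bound[OF coer] by blast
  define a where "a = min (cm) (-R)"
  have "f cm + K \<le> f a" using R by (auto simp: a_def)
  moreover have "f cm \<le> f cm + K" using K by simp
  ultimately obtain s where s: "a \<le> s" "s \<le> cm" "f s = f cm + K"
    using IVT2'[of f cm "f cm + K" a] cont by (auto simp: a_def)
  show ?thesis
  proof (rule ex1I[of _ s])
    show "s \<le> cm \<and> f s = f cm + K" using s by auto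
  next
    fix s' assume s': "s' \<le> cm \<and> f s' = f cm + K"
    show "s' = s"
    proof (rule ccontr)
      assume "s' \<noteq> s"
      hence "s' < s \<or> s < s'" by auto
      thus False using cv(2) s s' by force
    qed
  qed
qed

lemma Hf_step: "Suc u < hor P \<Longrightarrow> Hf P \<theta> u =
   (\<lambda>y. Cf P u y + disc P * (\<Sum>m. Vf P \<theta> (Suc u) (y - zg \<theta> (int m - 1)) * fg P \<theta> u (int m - 1)))"
  unfolding Hf_def by (subst HSs_step) (auto simp: Let_def)

lemma Sv_step: "Suc u < hor P \<Longrightarrow> Sv P \<theta> u =
   Sup {zg \<theta> m | m. Iv P \<theta> u \<le> zg \<theta> m \<and> zg \<theta> m \<le> SU P \<theta> u \<and>
                  (\<forall>n. Iv P \<theta> u \<le> zg \<theta> n \<and> zg \<theta> n \<le> SU P \<theta> u \<longrightarrow> Hf P \<theta> u (zg \<theta> m) \<le> Hf P \<theta> u (zg \<theta> n))}"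
  unfolding Sv_def by (subst HSs_step) (auto simp: Let_def Hf_step)

lemma sv_step: "Suc u < hor P \<Longrightarrow> sv P \<theta> u =
   (if setupK P u = 0 then Sv P \<theta> u
    else Inf {zg \<theta> m | m. Ibar P \<theta> u \<le> zg \<theta> m \<and> zg \<theta> m \<le> Sv P \<theta> u \<and>
                           Hf P \<theta> u (zg \<theta> m) \<le> Hf P \<theta> u (Sv P \<theta> u) + setupK P u})"
  unfolding sv_def by (subst HSs_step) (auto simp: Let_def Hf_step Sv_step)

lemma base_T: "Hf P \<theta> (hor P - 1) = Cf P (hor P - 1)" "Sv P \<theta> (hor P - 1) = Cm P (hor P - 1)"
   "sv P \<theta> (hor P - 1) = sT P" "Ibar P \<theta> (hor P - 1) = sT P"
   "phibar P \<theta> \<gamma> (hor P - 1) = (\<lambda>x y. if y < sT P then 0 else \<gamma> (hor P - 1) * x)"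
  by (simp_all add: Hf_def Sv_def sv_def Ibar_def phibar_def)

lemma Ibar_step: "Suc u < hor P \<Longrightarrow> Ibar P \<theta> u = Ibarfrom P \<theta> u (Iv P \<theta> u)"
proof -
  assume a: "Suc u < hor P"
  have e: "hor P - 1 - u = Suc (hor P - 2 - u)" using a by arith
  have e2: "hor P - 2 - (hor P - 2 - u) = u" using a by arith
  have e3: "hor P - 2 - u = hor P - 1 - Suc u" by arith
  show ?thesis unfolding Ibar_def e Iv_def
    apply (simp only: Ibar_aux.simps Let_def e2)
    apply (simp add: e3 Ibar_def)
    done
qed

lemma phibar_step: "Suc u < hor P \<Longrightarrow> phibar P \<theta> \<gamma> u = phifrom \<theta> (sv P \<theta> u) (psibar P \<theta> \<gamma> u)"
proof -
  assume a: "Suc u < hor P"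
  have e: "hor P - 1 - u = Suc (hor P - 2 - u)" using a by arith
  have e2: "hor P - 2 - (hor P - 2 - u) = u" using a by arith
  have e3: "hor P - 2 - u = hor P - 1 - Suc u" by arith
  have "\<not> hor P - 1 \<le> u" using a by arith
  thus ?thesis unfolding phibar_def e psibar_def
    apply (simp only: phi_aux.simps Let_def e2)
    apply (simp add: e3 phibar_def)
    done
qed

lemma psibar_step: "Suc u < hor P \<Longrightarrow> psibar P \<theta> \<gamma> u = psifrom P \<theta> \<gamma> u (phibar P \<theta> \<gamma> (Suc u))"
  unfolding psibar_def by auto



lemma floor_mul: "0 < \<theta> \<Longrightarrow> real_of_int \<lfloor>v / \<theta>\<rfloor> * \<theta> \<le> v"
proof -
  assume th: "0 < \<theta>"
  have a: "real_of_int \<lfloor>v / \<theta>\<rfloor> \<le> v / \<theta>" by linarith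
  have "real_of_int \<lfloor>v / \<theta>\<rfloor> * \<theta> \<le> v / \<theta> * \<theta>" using mult_right_mono[OF a, of \<theta>] th by simp
  thus ?thesis using th by simp
qed

lemma floor_mul2: "0 < \<theta> \<Longrightarrow> v < real_of_int \<lfloor>v / \<theta>\<rfloor> * \<theta> + \<theta>"
proof -
  assume th: "0 < \<theta>"
  have "v / \<theta> < real_of_int \<lfloor>v / \<theta>\<rfloor> + 1" by linarith
  hence "v / \<theta> * \<theta> < (real_of_int \<lfloor>v / \<theta>\<rfloor> + 1) * \<theta>" using th by (rule mult_strict_right_mono)
  thus ?thesis using th by (simp add: algebra_simps)
qed

lemma ceil_mul: "0 < \<theta> \<Longrightarrow> v \<le> real_of_int \<lceil>v / \<theta>\<rceil> * \<theta>"
proof -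
  assume th: "0 < \<theta>"
  have a: "v / \<theta> \<le> real_of_int \<lceil>v / \<theta>\<rceil>" by linarith
  have "v / \<theta> * \<theta> \<le> real_of_int \<lceil>v / \<theta>\<rceil> * \<theta>" using mult_right_mono[OF a, of \<theta>] th by simp
  thus ?thesis using th by simp
qed

context
  fixes P :: "'a invmodel" and \<theta> :: real
  assumes th: "0 < \<theta>" and Kpos: "\<forall>i<hor P. 0 \<le> setupK P i"
    and Ccoer: "\<forall>i<hor P. filterlim (Cf P i) at_top at_infinity"
begin

lemma Ifrom_prop: "\<exists>m. Ifrom P \<theta> u b = zg \<theta> m \<and> zg \<theta> m < min (b - \<theta>) (Cm P u)"
proof -
  let ?v = "min (b - \<theta>) (Cm P u)"
  have q0: "zg \<theta> (\<lfloor>?v / \<theta>\<rfloor> - 1) < ?v"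
    using floor_mul[OF th, of ?v] th by (simp add: zg_def algebra_simps)
  obtain m where "zg \<theta> m < ?v" "Sup {zg \<theta> m | m. zg \<theta> m < ?v} = zg \<theta> m"
    using grid_sup[OF th, of "\<lambda>m. zg \<theta> m < ?v", OF q0, of ?v] by auto
  thus ?thesis unfolding Ifrom_def by auto
qed

lemma Ibarfrom_prop:
  assumes u: "u < hor P"
  shows "\<exists>m. Ibarfrom P \<theta> u (zg \<theta> mI) = zg \<theta> m + \<theta> \<and> m < mI \<and>
              Cf P u (zg \<theta> m) > Cf P u (zg \<theta> mI) + setupK P u"
proof -
  let ?I = "zg \<theta> mI" and ?C = "Cf P u" and ?K = "setupK P u"
  let ?Q = "\<lambda>m. zg \<theta> m \<le> ?I \<and> ?C (zg \<theta> m) > ?C ?I + ?K"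
  obtain R where R: "R > 0" "\<forall>x. R \<le> \<bar>x\<bar> \<longrightarrow> ?C ?I + ?K + 1 \<le> ?C x"
    using coer_bound[of ?C] Ccoer u by blast
  define m0 where "m0 = min mI (- \<lceil>R / \<theta>\<rceil>)"
  have "zg \<theta> m0 \<le> zg \<theta> (- \<lceil>R / \<theta>\<rceil>)" using th by (simp add: zg_le_iff m0_def)
  also have "\<dots> \<le> - R"
    using ceil_mul[OF th, of R] by (simp add: zg_def)
  finally have "R \<le> \<bar>zg \<theta> m0\<bar>" by linarith
  hence q0: "?Q m0" using R th by (auto simp: m0_def zg_le_iff)
  obtain m where m: "?Q m" "Sup {zg \<theta> m | m. ?Q m} = zg \<theta> m"
    using grid_sup[OF th, of ?Q m0 ?I] q0 by blast
  have "m \<noteq> mI" using m(1) Kpos u by auto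
  hence "m < mI" using m(1) th by (auto simp: zg_le_iff)
  thus ?thesis using m unfolding Ibarfrom_def by auto
qed

lemma SU_ge: assumes u: "u < hor P" shows "Cm P u \<le> SU P \<theta> u"
proof -
  let ?C = "Cf P u"
  let ?Q = "\<lambda>z. \<exists>m. z = zg \<theta> m \<and> Cm P u \<le> zg \<theta> m \<and> ?C (zg \<theta> m) > ?C (zg \<theta> (n0 P \<theta> u)) + setupK P u"
  obtain R where R: "R > 0" "\<forall>x. R \<le> \<bar>x\<bar> \<longrightarrow> ?C (zg \<theta> (n0 P \<theta> u)) + setupK P u + 1 \<le> ?C x"
    using coer_bound[of ?C] Ccoer u by blast
  define m0 where "m0 = \<lceil>max R (Cm P u) / \<theta>\<rceil>"
  have "max R (Cm P u) \<le> zg \<theta> m0"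
    using ceil_mul[OF th, of "max R (Cm P u)"] by (simp add: zg_def m0_def)
  hence "R \<le> \<bar>zg \<theta> m0\<bar>" by auto
  hence "?C (zg \<theta> (n0 P \<theta> u)) + setupK P u < ?C (zg \<theta> m0)" using R by force
  hence "?Q (zg \<theta> m0)" using \<open>max R (Cm P u) \<le> zg \<theta> m0\<close> by auto
  hence ne: "{zg \<theta> m | m. Cm P u \<le> zg \<theta> m \<and> ?C (zg \<theta> m) > ?C (zg \<theta> (n0 P \<theta> u)) + setupK P u} \<noteq> {}"
    by blast
  show ?thesis unfolding SU_def by (rule cInf_greatest[OF ne]) auto
qed

lemma IvIbar:
  assumes u: "Suc u < hor P"
  obtains mI mb where "Iv P \<theta> u = zg \<theta> mI" "zg \<theta> mI < Ibar P \<theta> (Suc u) - \<theta>" "zg \<theta> mI < Cm P u"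
    "Ibar P \<theta> u = zg \<theta> (mb + 1)" "mb < mI" "Cf P u (zg \<theta> mb) > Cf P u (zg \<theta> mI) + setupK P u"
proof -
  obtain mI where mI: "Iv P \<theta> u = zg \<theta> mI" "zg \<theta> mI < min (Ibar P \<theta> (Suc u) - \<theta>) (Cm P u)"
    using Ifrom_prop[of u "Ibar P \<theta> (Suc u)"] unfolding Iv_def by blast
  obtain mb where mb: "Ibarfrom P \<theta> u (zg \<theta> mI) = zg \<theta> mb + \<theta>" "mb < mI"
     "Cf P u (zg \<theta> mb) > Cf P u (zg \<theta> mI) + setupK P u"
    using Ibarfrom_prop[of u mI] u by auto
  have "Ibar P \<theta> u = zg \<theta> (mb + 1)" using mb(1) Ibar_step[OF u] mI(1) by (simp add: zg_plus1)
  thus ?thesis using that mI mb by auto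
qed

lemma fin_argmin:
  fixes f :: "int \<Rightarrow> real"
  assumes "finite N" "N \<noteq> {}"
  obtains n where "n \<in> N" "\<forall>k\<in>N. f n \<le> f k"
proof -
  have "Min (f ` N) \<in> f ` N" using assms by simp
  then obtain n where n: "n \<in> N" "f n = Min (f ` N)" by auto
  have "\<forall>k\<in>N. f n \<le> f k" using n assms by auto
  thus ?thesis using that n by blast
qed

lemma S_prop:
  assumes u: "Suc u < hor P"
  obtains mS where "Sv P \<theta> u = zg \<theta> mS" "Iv P \<theta> u \<le> zg \<theta> mS" "zg \<theta> mS \<le> SU P \<theta> u"
    "\<forall>n. Iv P \<theta> u \<le> zg \<theta> n \<and> zg \<theta> n \<le> SU P \<theta> u \<longrightarrow> Hf P \<theta> u (zg \<theta> mS) \<le> Hf P \<theta> u (zg \<theta> n)"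
proof -
  obtain mI mb where I: "Iv P \<theta> u = zg \<theta> mI" "zg \<theta> mI < Cm P u"
    using IvIbar[OF u] by metis
  let ?U = "SU P \<theta> u" and ?H = "Hf P \<theta> u"
  have IU: "zg \<theta> mI \<le> ?U" using I SU_ge[of u] u by auto
  let ?N = "{n. mI \<le> n \<and> zg \<theta> n \<le> ?U}"
  have fin: "finite ?N"
  proof (rule finite_subset[of _ "{mI..\<lceil>?U / \<theta>\<rceil>}"])
    show "?N \<subseteq> {mI..\<lceil>?U / \<theta>\<rceil>}"
    proof
      fix n assume "n \<in> ?N"
      hence "real_of_int n * \<theta> \<le> ?U" "mI \<le> n" by (auto simp: zg_def)
      hence "real_of_int n \<le> ?U / \<theta>" "mI \<le> n" using th by (auto simp: field_simps)
      thus "n \<in> {mI..\<lceil>?U / \<theta>\<rceil>}" by (auto intro: le_ceiling_iff[THEN iffD2])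
    qed
  qed simp
  have "mI \<in> ?N" using IU by auto
  then obtain n0 where n0: "n0 \<in> ?N" "\<forall>k\<in>?N. ?H (zg \<theta> n0) \<le> ?H (zg \<theta> k)"
    using fin_argmin[OF fin, of "\<lambda>n. ?H (zg \<theta> n)"] by blast
  have eq: "\<And>n. Iv P \<theta> u \<le> zg \<theta> n \<longleftrightarrow> mI \<le> n" using I th by (simp add: zg_le_iff)
  let ?Q = "\<lambda>m. Iv P \<theta> u \<le> zg \<theta> m \<and> zg \<theta> m \<le> ?U \<and>
                  (\<forall>n. Iv P \<theta> u \<le> zg \<theta> n \<and> zg \<theta> n \<le> ?U \<longrightarrow> ?H (zg \<theta> m) \<le> ?H (zg \<theta> n))"
  have q0: "?Q n0" using n0 eq by auto
  obtain m where m: "?Q m" "Sup {zg \<theta> m | m. ?Q m} = zg \<theta> m"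
    using grid_sup[OF th, of ?Q n0 ?U, OF q0] by blast
  have "Sv P \<theta> u = zg \<theta> m" using m(2) Sv_step[OF u] by simp
  thus ?thesis using that m(1) by blast
qed

lemma s_prop:
  assumes u: "Suc u < hor P"
  obtains ms where "sv P \<theta> u = zg \<theta> ms" "Ibar P \<theta> u \<le> sv P \<theta> u" "sv P \<theta> u \<le> Sv P \<theta> u"
    "Hf P \<theta> u (sv P \<theta> u) \<le> Hf P \<theta> u (Sv P \<theta> u) + setupK P u"
    "setupK P u \<noteq> 0 \<Longrightarrow> \<forall>n. Ibar P \<theta> u \<le> zg \<theta> n \<and> zg \<theta> n \<le> Sv P \<theta> u \<and>
          Hf P \<theta> u (zg \<theta> n) \<le> Hf P \<theta> u (Sv P \<theta> u) + setupK P u \<longrightarrow> ms \<le> n"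
proof -
  obtain mI mb where I: "Iv P \<theta> u = zg \<theta> mI" "Ibar P \<theta> u = zg \<theta> (mb + 1)" "mb < mI"
    using IvIbar[OF u] by metis
  obtain mS where S: "Sv P \<theta> u = zg \<theta> mS" "Iv P \<theta> u \<le> zg \<theta> mS"
    using S_prop[OF u] by metis
  have IbS: "Ibar P \<theta> u \<le> Sv P \<theta> u" using I S th by (auto simp: zg_le_iff)
  have K0: "0 \<le> setupK P u" using Kpos u by auto
  let ?H = "Hf P \<theta> u" and ?K = "setupK P u"
  show ?thesis
  proof (cases "?K = 0")
    case True
    hence "sv P \<theta> u = Sv P \<theta> u" using sv_step[OF u] by simp
    thus ?thesis using that[of mS] S IbS True by auto
  next
    case False
    let ?Q = "\<lambda>m. Ibar P \<theta> u \<le> zg \<theta> m \<and> zg \<theta> m \<le> Sv P \<theta> u \<and> ?H (zg \<theta> m) \<le> ?H (Sv P \<theta> u) + ?K"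
    have q0: "?Q mS" using S IbS K0 by auto
    obtain m where m: "?Q m" "Inf {zg \<theta> m | m. ?Q m} = zg \<theta> m" "\<forall>n. ?Q n \<longrightarrow> m \<le> n"
      using grid_inf[OF th, of ?Q mS "Ibar P \<theta> u", OF q0] by blast
    have "sv P \<theta> u = zg \<theta> m" using m(2) sv_step[OF u] False by simp
    thus ?thesis using that[of m] m by auto
  qed
qed

lemma Ibar_le_sv: "u < hor P \<Longrightarrow> Ibar P \<theta> u \<le> sv P \<theta> u"
proof -
  assume u: "u < hor P"
  show ?thesis
  proof (cases "Suc u < hor P")
    case True thus ?thesis using s_prop[OF True] by metis
  next
    case False
    hence e: "u = hor P - 1" using u by arith
    have "Ibar P \<theta> (hor P - 1) = sv P \<theta> (hor P - 1)" by (simp only: base_T)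
    thus ?thesis unfolding e by simp
  qed
qed

lemma Vf_low: "y < sv P \<theta> i \<Longrightarrow> Vf P \<theta> i y = Hf P \<theta> i (Sv P \<theta> i) + setupK P i"
  by (simp add: Vf_def Vfrom_def)

lemma Vf_high: "\<not> y < sv P \<theta> i \<Longrightarrow> Vf P \<theta> i y = Hf P \<theta> i y"
  by (simp add: Vf_def Vfrom_def)

lemma zg_nat_ge: "0 < \<theta> \<Longrightarrow> - \<theta> \<le> zg \<theta> (int m - 1)"
  by (simp add: zg_def algebra_simps)

lemma crux:
  assumes u: "Suc u < hor P" and K: "setupK P u \<noteq> 0"
  shows "Hf P \<theta> u (Sv P \<theta> u) + setupK P u < Hf P \<theta> u (sv P \<theta> u - \<theta>)"
proof -
  let ?H = "Hf P \<theta> u" and ?K = "setupK P u" and ?C = "Cf P u"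
  obtain ms where s: "sv P \<theta> u = zg \<theta> ms" "Ibar P \<theta> u \<le> sv P \<theta> u" "sv P \<theta> u \<le> Sv P \<theta> u"
    "\<forall>n. Ibar P \<theta> u \<le> zg \<theta> n \<and> zg \<theta> n \<le> Sv P \<theta> u \<and>
          ?H (zg \<theta> n) \<le> ?H (Sv P \<theta> u) + ?K \<longrightarrow> ms \<le> n"
    using s_prop[OF u] K by metis
  obtain mI mb where I: "Iv P \<theta> u = zg \<theta> mI" "zg \<theta> mI < Ibar P \<theta> (Suc u) - \<theta>" "zg \<theta> mI < Cm P u"
    "Ibar P \<theta> u = zg \<theta> (mb + 1)" "mb < mI" "?C (zg \<theta> mb) > ?C (zg \<theta> mI) + ?K"
    using IvIbar[OF u] by metis
  have ms_ge: "mb + 1 \<le> ms" using s(1,2) I(4) th by (simp add: zg_le_iff)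
  show ?thesis
  proof (cases "mb + 1 < ms")
    case True
    have "Ibar P \<theta> u \<le> zg \<theta> (ms - 1)" using True I(4) th by (simp add: zg_le_iff)
    moreover have "zg \<theta> (ms - 1) \<le> Sv P \<theta> u" using s(1,3) th by (simp add: zg_plus1)
    ultimately have "\<not> ?H (zg \<theta> (ms - 1)) \<le> ?H (Sv P \<theta> u) + ?K" using s(4) by force
    moreover have "zg \<theta> (ms - 1) = sv P \<theta> u - \<theta>" using s(1) by (simp add: zg_plus1)
    ultimately show ?thesis by simp
  next
    case False
    hence ms: "ms = mb + 1" using ms_ge by simp
    have svb: "sv P \<theta> u - \<theta> = zg \<theta> mb" using s(1) ms by (simp add: zg_plus1)
    let ?c = "Hf P \<theta> (Suc u) (Sv P \<theta> (Suc u)) + setupK P (Suc u)"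
    have Vc: "\<And>y m. y \<le> zg \<theta> mI \<Longrightarrow> Vf P \<theta> (Suc u) (y - zg \<theta> (int m - 1)) = ?c"
    proof -
      fix y m assume y: "y \<le> zg \<theta> mI"
      have "Ibar P \<theta> (Suc u) \<le> sv P \<theta> (Suc u)" using Ibar_le_sv u by blast
      hence "y - zg \<theta> (int m - 1) < sv P \<theta> (Suc u)" using y I(2) zg_nat_ge[OF th, of m] by linarith
      thus "Vf P \<theta> (Suc u) (y - zg \<theta> (int m - 1)) = ?c" by (rule Vf_low)
    qed
    have Hrel: "\<And>y. y \<le> zg \<theta> mI \<Longrightarrow> ?H y = ?C y + disc P * (\<Sum>m. ?c * fg P \<theta> u (int m - 1))"
      using Vc by (simp add: Hf_step[OF u])
    have "zg \<theta> mb \<le> zg \<theta> mI" using I(5) th by (simp add: zg_le_iff)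
    hence "?H (zg \<theta> mb) - ?H (zg \<theta> mI) = ?C (zg \<theta> mb) - ?C (zg \<theta> mI)"
      using Hrel[of "zg \<theta> mb"] Hrel[of "zg \<theta> mI"] by simp
    moreover have "?H (Sv P \<theta> u) \<le> ?H (zg \<theta> mI)"
    proof -
      obtain mS where S: "Sv P \<theta> u = zg \<theta> mS"
        "\<forall>n. Iv P \<theta> u \<le> zg \<theta> n \<and> zg \<theta> n \<le> SU P \<theta> u \<longrightarrow> ?H (zg \<theta> mS) \<le> ?H (zg \<theta> n)"
        using S_prop[OF u] by metis
      have "zg \<theta> mI \<le> SU P \<theta> u" using I(3) SU_ge[of u] u by auto
      thus ?thesis using S I(1) by auto
    qed
    ultimately show ?thesis using I(6) unfolding svb by linarith
  qed
qed

end


lemma the_n: assumes th: "0 < \<theta>"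
  shows "(THE n. zg \<theta> (n - 1) \<le> w \<and> w < zg \<theta> n) = \<lfloor>w / \<theta>\<rfloor> + 1"
proof (rule the_equality)
  show "zg \<theta> (\<lfloor>w / \<theta>\<rfloor> + 1 - 1) \<le> w \<and> w < zg \<theta> (\<lfloor>w / \<theta>\<rfloor> + 1)"
    using floor_mul[OF th, of w] floor_mul2[OF th, of w] by (simp add: zg_def algebra_simps)
next
  fix n assume n: "zg \<theta> (n - 1) \<le> w \<and> w < zg \<theta> n"
  have n': "real_of_int (n - 1) * \<theta> \<le> w" "w < real_of_int n * \<theta>" using n by (auto simp: zg_def)
  have a: "zg \<theta> (n - 1) < zg \<theta> (\<lfloor>w / \<theta>\<rfloor> + 1)" using n'(1) floor_mul2[OF th, of w]
    unfolding zg_def by (simp add: algebra_simps)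
  have b: "zg \<theta> (\<lfloor>w / \<theta>\<rfloor> + 1 - 1) < zg \<theta> n" using n'(2) floor_mul[OF th, of w]
    unfolding zg_def by simp
  show "n = \<lfloor>w / \<theta>\<rfloor> + 1" using a b th by (simp add: zg_less_iff)
qed

lemma phi_zero: "u < hor P \<Longrightarrow> y < sv P \<theta> u \<Longrightarrow> phibar P \<theta> \<gamma> u x y = 0"
proof -
  assume u: "u < hor P" and y: "y < sv P \<theta> u"
  show ?thesis
  proof (cases "Suc u < hor P")
    case True thus ?thesis using y by (simp add: phibar_step phifrom_def)
  next
    case False
    hence e: "u = hor P - 1" using u by arith
    have "phibar P \<theta> \<gamma> (hor P - 1) x y = (if y < sv P \<theta> (hor P - 1) then 0 else \<gamma> (hor P - 1) * x)"
      by (simp only: base_T)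
    thus ?thesis using y unfolding e by simp
  qed
qed

lemma sum_ext_int:
  fixes g :: "int \<Rightarrow> real"
  assumes "A \<le> B" "\<And>m. A < m \<Longrightarrow> m \<le> B \<Longrightarrow> g m = 0"
  shows "(\<Sum>m\<in>{-1..A}. g m) = (\<Sum>m\<in>{-1..B}. g m)"
  by (rule sum.mono_neutral_left) (use assms in auto)

lemma psi_sum:
  assumes th: "0 < \<theta>" and u: "Suc u < hor P" and L: "-2 \<le> L"
    and Lp: "\<And>m. L < m \<Longrightarrow> y - zg \<theta> m < sv P \<theta> (Suc u)"
  shows "psibar P \<theta> \<gamma> u x y = \<gamma> u * x +
           disc P * (\<Sum>m\<in>{-1..L}. phibar P \<theta> \<gamma> (Suc u) x (y - zg \<theta> m) * fg P \<theta> u m)"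
proof -
  let ?s = "sv P \<theta> (Suc u)"
  let ?g = "\<lambda>m. phibar P \<theta> \<gamma> (Suc u) x (y - zg \<theta> m) * fg P \<theta> u m"
  have gz: "\<And>m. y - zg \<theta> m < ?s \<Longrightarrow> ?g m = 0" using phi_zero[OF u] by simp
  show ?thesis
  proof (cases "y < ?s - \<theta>")
    case True
    have "\<And>m. -1 \<le> m \<Longrightarrow> y - zg \<theta> m < ?s"
    proof -
      fix m :: int assume "-1 \<le> m"
      hence "zg \<theta> (-1) \<le> zg \<theta> m" using th by (simp add: zg_le_iff)
      thus "y - zg \<theta> m < ?s" using True by (simp add: zg_def)
    qed
    hence "(\<Sum>m\<in>{-1..L}. ?g m) = 0" using gz by (intro sum.neutral) auto
    thus ?thesis using True by (simp add: psibar_step[OF u] psifrom_def)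
  next
    case False
    define n where "n = \<lfloor>(y - ?s) / \<theta>\<rfloor> + 1"
    have nth: "(THE n. zg \<theta> (n - 1) \<le> y - ?s \<and> y - ?s < zg \<theta> n) = n" unfolding n_def by (rule the_n[OF th])
    have ps: "psibar P \<theta> \<gamma> u x y = \<gamma> u * x + disc P * (\<Sum>m\<in>{-1..n - 1}. ?g m)"
      using False by (simp add: psibar_step[OF u] psifrom_def nth)
    have n1: "-1 \<le> n - 1"
    proof -
      have "-1 \<le> (y - ?s) / \<theta>" using False th by (simp add: field_simps)
      thus ?thesis unfolding n_def by linarith
    qed
    have zn: "y - ?s < zg \<theta> n" using floor_mul2[OF th, of "y - ?s"] by (simp add: n_def zg_def algebra_simps)
    have gn: "\<And>m. n \<le> m \<Longrightarrow> ?g m = 0"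
    proof -
      fix m assume "n \<le> m"
      hence "zg \<theta> n \<le> zg \<theta> m" using th by (simp add: zg_le_iff)
      thus "?g m = 0" using zn gz by simp
    qed
    have "(\<Sum>m\<in>{-1..n - 1}. ?g m) = (\<Sum>m\<in>{-1..max L (n - 1)}. ?g m)"
      by (rule sum_ext_int) (use gn in auto)
    also have "\<dots> = (\<Sum>m\<in>{-1..L}. ?g m)"
      by (rule sum_ext_int[symmetric]) (use gz Lp in auto)
    finally show ?thesis using ps by simp
  qed
qed


lemma reindex_nat_int:
  fixes g :: "int \<Rightarrow> real"
  shows "(\<Sum>m<N. g (int m - 1)) = (\<Sum>k\<in>{-1..int N - 2}. g k)"
proof (induction N)
  case 0 show ?case by simp
next
  case (Suc N)
  have e: "{-1..int (Suc N) - 2} = insert (int N - 1) {-1..int N - 2}" by auto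
  show ?case unfolding e using Suc by (simp add: add.commute)
qed

lemma L_choice: assumes th: "0 < \<theta>"
  shows "\<exists>L\<ge>-2. \<forall>m. L < m \<longrightarrow> y - zg \<theta> m < s"
proof (intro exI[of _ "max (-2) \<lfloor>(y - s) / \<theta>\<rfloor>"] conjI allI impI)
  fix m assume "max (-2) \<lfloor>(y - s) / \<theta>\<rfloor> < m"
  hence "\<lfloor>(y - s) / \<theta>\<rfloor> + 1 \<le> m" by auto
  hence "zg \<theta> (\<lfloor>(y - s) / \<theta>\<rfloor> + 1) \<le> zg \<theta> m" using th by (simp add: zg_le_iff)
  moreover have "y - s < zg \<theta> (\<lfloor>(y - s) / \<theta>\<rfloor> + 1)"
    using floor_mul2[OF th, of "y - s"] by (simp add: zg_def algebra_simps)
  ultimately show "y - zg \<theta> m < s" by linarith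
qed simp

lemma suminf_abs_bound:
  fixes c d :: "nat \<Rightarrow> real"
  assumes "summable c" "summable d" "\<And>m. \<bar>c m\<bar> \<le> d m"
  shows "\<bar>suminf c\<bar> \<le> suminf d"
proof -
  have "suminf c \<le> suminf d" using assms by (intro suminf_le) (auto simp: abs_le_iff)
  moreover have "suminf (\<lambda>m. - c m) \<le> suminf d" using assms
    by (intro suminf_le) (auto intro: summable_minus simp: abs_le_iff)
  moreover have "suminf (\<lambda>m. - c m) = - suminf c" using assms(1) by (rule suminf_minus)
  ultimately show ?thesis by linarith
qed

context
  fixes P :: "'a invmodel" and \<theta> :: real and \<gamma> :: "nat \<Rightarrow> real"
  assumes th: "0 < \<theta>" and alpha: "0 < disc P" "disc P \<le> 1" and T2: "2 \<le> hor P"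
    and Kpos: "\<forall>i<hor P. 0 \<le> setupK P i"
    and ps: "prob_space (pspace P)"
    and Dmeas: "\<forall>i < hor P. dem P i \<in> borel_measurable (pspace P)"
    and Cconv: "\<forall>i < hor P. convex_on UNIV (Cf P i)"
    and Ccoer: "\<forall>i < hor P. filterlim (Cf P i) at_top at_infinity"
    and gamma: "\<forall>i < hor P. 0 \<le> \<gamma> i \<and> (\<forall>u v. \<bar>Cf P i u - Cf P i v\<bar> \<le> \<gamma> i * \<bar>u - v\<bar>)"
    and Vsum: "\<forall>i y. 1 \<le> i \<and> i < hor P \<longrightarrow>
                 summable (\<lambda>m. Vf P \<theta> i (y - zg \<theta> (int m - 1)) * fg P \<theta> (i - 1) (int m - 1))"
begin

lemmas Vlow = Vf_low[OF th Kpos Ccoer]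
lemmas Vhigh = Vf_high[OF th Kpos Ccoer]

lemma Dset: "i < hor P \<Longrightarrow> {\<omega> \<in> space (pspace P). dem P i \<omega> \<le> a} \<in> sets (pspace P)"
  using Dmeas borel_measurable_iff_le by blast

lemma Fd_mono: "i < hor P \<Longrightarrow> a \<le> b \<Longrightarrow> Fd P i a \<le> Fd P i b"
  unfolding Fd_def
  by (rule finite_measure.finite_measure_mono[OF prob_space.axioms(1)[OF ps]]) (use Dset in auto)

lemma fg_nonneg: "i < hor P \<Longrightarrow> 0 \<le> fg P \<theta> i m"
  unfolding fg_def using Fd_mono[of i "zg \<theta> m" "zg \<theta> (m + 1)"] th by (simp add: zg_le_iff)

lemma sT_prop: "sT P \<le> Cm P (hor P - 1) \<and>
   Cf P (hor P - 1) (sT P) = Cf P (hor P - 1) (Cm P (hor P - 1)) + setupK P (hor P - 1)"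
proof -
    have i: "hor P - 1 < hor P" using T2 by simp
    have "\<exists>!s. s \<le> Cm P (hor P - 1) \<and> Cf P (hor P - 1) s = Cf P (hor P - 1) (Cm P (hor P - 1)) + setupK P (hor P - 1)"
      unfolding Cm_def
      by (rule cvx_sT[of _ "\<gamma> (hor P - 1)"]) (use Cconv Ccoer gamma Kpos i in auto)
    thus ?thesis unfolding sT_def by (rule theI')
qed

definition "PropN u \<longleftrightarrow> (\<forall>j. 0 \<le> phibar P \<theta> \<gamma> u \<theta> (zg \<theta> j))"
definition "PropM u \<longleftrightarrow> (\<forall>j. phibar P \<theta> \<gamma> u \<theta> (zg \<theta> j) \<le> phibar P \<theta> \<gamma> u \<theta> (zg \<theta> (j + 1)))"
definition "PropQ u \<longleftrightarrow> (\<forall>j y y'. zg \<theta> (j - 1) \<le> y \<and> y \<le> zg \<theta> j \<and> zg \<theta> (j - 1) \<le> y' \<and> y' \<le> zg \<theta> j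
      \<longrightarrow> \<bar>Vf P \<theta> u y - Vf P \<theta> u y'\<bar> \<le> phibar P \<theta> \<gamma> u \<theta> (zg \<theta> j))"

lemma psi_nonneg:
  assumes u: "Suc u < hor P" and N: "PropN (Suc u)"
  shows "0 \<le> psibar P \<theta> \<gamma> u \<theta> (zg \<theta> j)"
proof -
  obtain L where L: "-2 \<le> L" "\<forall>m. L < m \<longrightarrow> zg \<theta> j - zg \<theta> m < sv P \<theta> (Suc u)"
    using L_choice[OF th] by blast
  have e: "psibar P \<theta> \<gamma> u \<theta> (zg \<theta> j) = \<gamma> u * \<theta> +
           disc P * (\<Sum>m\<in>{-1..L}. phibar P \<theta> \<gamma> (Suc u) \<theta> (zg \<theta> j - zg \<theta> m) * fg P \<theta> u m)"
    by (rule psi_sum[OF th u L(1)]) (use L(2) in auto)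
  have "0 \<le> (\<Sum>m\<in>{-1..L}. phibar P \<theta> \<gamma> (Suc u) \<theta> (zg \<theta> j - zg \<theta> m) * fg P \<theta> u m)"
    using N fg_nonneg[of u] u unfolding PropN_def by (intro sum_nonneg mult_nonneg_nonneg) (auto simp: zg_diff[symmetric])
  moreover have "0 \<le> \<gamma> u" using gamma u by auto
  ultimately show ?thesis unfolding e using alpha th by simp
qed

lemma psi_mono:
  assumes u: "Suc u < hor P" and M: "PropM (Suc u)"
  shows "psibar P \<theta> \<gamma> u \<theta> (zg \<theta> j) \<le> psibar P \<theta> \<gamma> u \<theta> (zg \<theta> (j + 1))"
proof -
  obtain L where L: "-2 \<le> L" "\<forall>m. L < m \<longrightarrow> zg \<theta> (j + 1) - zg \<theta> m < sv P \<theta> (Suc u)"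
    using L_choice[OF th] by blast
  have L': "\<forall>m. L < m \<longrightarrow> zg \<theta> j - zg \<theta> m < sv P \<theta> (Suc u)"
    using L(2) th by (auto simp: zg_plus1)
  have e1: "psibar P \<theta> \<gamma> u \<theta> (zg \<theta> j) = \<gamma> u * \<theta> +
           disc P * (\<Sum>m\<in>{-1..L}. phibar P \<theta> \<gamma> (Suc u) \<theta> (zg \<theta> j - zg \<theta> m) * fg P \<theta> u m)"
    by (rule psi_sum[OF th u L(1)]) (use L' in auto)
  have e2: "psibar P \<theta> \<gamma> u \<theta> (zg \<theta> (j + 1)) = \<gamma> u * \<theta> +
           disc P * (\<Sum>m\<in>{-1..L}. phibar P \<theta> \<gamma> (Suc u) \<theta> (zg \<theta> (j + 1) - zg \<theta> m) * fg P \<theta> u m)"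
    by (rule psi_sum[OF th u L(1)]) (use L(2) in auto)
  have "(\<Sum>m\<in>{-1..L}. phibar P \<theta> \<gamma> (Suc u) \<theta> (zg \<theta> j - zg \<theta> m) * fg P \<theta> u m)
     \<le> (\<Sum>m\<in>{-1..L}. phibar P \<theta> \<gamma> (Suc u) \<theta> (zg \<theta> (j + 1) - zg \<theta> m) * fg P \<theta> u m)"
  proof (rule sum_mono)
    fix m
    have "phibar P \<theta> \<gamma> (Suc u) \<theta> (zg \<theta> (j - m)) \<le> phibar P \<theta> \<gamma> (Suc u) \<theta> (zg \<theta> (j - m + 1))"
      using M unfolding PropM_def by blast
    moreover have "j - m + 1 = j + 1 - m" by simp
    ultimately have "phibar P \<theta> \<gamma> (Suc u) \<theta> (zg \<theta> j - zg \<theta> m) \<le> phibar P \<theta> \<gamma> (Suc u) \<theta> (zg \<theta> (j + 1) - zg \<theta> m)"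
      by (simp add: zg_diff[symmetric])
    thus "phibar P \<theta> \<gamma> (Suc u) \<theta> (zg \<theta> j - zg \<theta> m) * fg P \<theta> u m \<le> phibar P \<theta> \<gamma> (Suc u) \<theta> (zg \<theta> (j + 1) - zg \<theta> m) * fg P \<theta> u m"
      using fg_nonneg[of u m] u by (intro mult_right_mono) auto
  qed
  thus ?thesis unfolding e1 e2 using alpha by simp
qed


lemma H_cell:
  assumes u: "Suc u < hor P" and Q: "PropQ (Suc u)"
    and y: "zg \<theta> (j - 1) \<le> y" "y \<le> zg \<theta> j" and y': "zg \<theta> (j - 1) \<le> y'" "y' \<le> zg \<theta> j"
  shows "\<bar>Hf P \<theta> u y - Hf P \<theta> u y'\<bar> \<le> psibar P \<theta> \<gamma> u \<theta> (zg \<theta> j)"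
proof -
  let ?V = "Vf P \<theta> (Suc u)" and ?f = "fg P \<theta> u" and ?ph = "phibar P \<theta> \<gamma> (Suc u) \<theta>"
  define a where "a m = ?V (y - zg \<theta> (int m - 1)) * ?f (int m - 1)" for m :: nat
  define b where "b m = ?V (y' - zg \<theta> (int m - 1)) * ?f (int m - 1)" for m :: nat
  define d where "d m = ?ph (zg \<theta> j - zg \<theta> (int m - 1)) * ?f (int m - 1)" for m :: nat
  have "1 \<le> Suc u \<and> Suc u < hor P" using u by simp
  hence vs0: "\<And>z. summable (\<lambda>m. ?V (z - zg \<theta> (int m - 1)) * fg P \<theta> (Suc u - 1) (int m - 1))"
    using Vsum by blast
  have vs: "\<And>z. summable (\<lambda>m. ?V (z - zg \<theta> (int m - 1)) * ?f (int m - 1))"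
    using vs0 by simp
  have sa: "summable a" unfolding a_def by (rule vs)
  have sb: "summable b" unfolding b_def by (rule vs)
  obtain L where L: "-2 \<le> L" "\<forall>m. L < m \<longrightarrow> zg \<theta> j - zg \<theta> m < sv P \<theta> (Suc u)"
    using L_choice[OF th] by blast
  have dz: "\<And>m. m \<notin> {..<nat (L + 2)} \<Longrightarrow> d m = 0"
  proof -
    fix m assume "m \<notin> {..<nat (L + 2)}"
    hence "L < int m - 1" using L(1) by auto
    thus "d m = 0" unfolding d_def using L(2) phi_zero[OF u] by simp
  qed
  have sd: "summable d" by (rule summable_finite[of "{..<nat (L + 2)}"]) (use dz in auto)
  have "suminf d = (\<Sum>m<nat (L + 2). d m)" by (rule suminf_finite) (use dz in auto)
  also have "\<dots> = (\<Sum>k\<in>{-1..L}. ?ph (zg \<theta> j - zg \<theta> k) * ?f k)"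
    unfolding d_def reindex_nat_int[of "\<lambda>k. ?ph (zg \<theta> j - zg \<theta> k) * ?f k"] using L(1) by simp
  finally have sdv: "suminf d = (\<Sum>k\<in>{-1..L}. ?ph (zg \<theta> j - zg \<theta> k) * ?f k)" .
  have ps: "psibar P \<theta> \<gamma> u \<theta> (zg \<theta> j) = \<gamma> u * \<theta> + disc P * suminf d"
    unfolding sdv by (rule psi_sum[OF th u L(1)]) (use L(2) in auto)
  have bd: "\<And>m. \<bar>a m - b m\<bar> \<le> d m"
  proof -
    fix m
    let ?k = "j - (int m - 1)"
    have c1: "zg \<theta> (?k - 1) \<le> y - zg \<theta> (int m - 1)" "y - zg \<theta> (int m - 1) \<le> zg \<theta> ?k"
      "zg \<theta> (?k - 1) \<le> y' - zg \<theta> (int m - 1)" "y' - zg \<theta> (int m - 1) \<le> zg \<theta> ?k"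
      using y y' by (simp_all add: zg_diff)
    hence "\<bar>?V (y - zg \<theta> (int m - 1)) - ?V (y' - zg \<theta> (int m - 1))\<bar> \<le> ?ph (zg \<theta> ?k)"
      using Q unfolding PropQ_def by blast
    hence "\<bar>?V (y - zg \<theta> (int m - 1)) - ?V (y' - zg \<theta> (int m - 1))\<bar> * ?f (int m - 1)
       \<le> ?ph (zg \<theta> ?k) * ?f (int m - 1)"
      using fg_nonneg[of u] u by (intro mult_right_mono) auto
    moreover have "\<bar>a m - b m\<bar> = \<bar>?V (y - zg \<theta> (int m - 1)) - ?V (y' - zg \<theta> (int m - 1))\<bar> * ?f (int m - 1)"
      unfolding a_def b_def using fg_nonneg[of u] u by (simp add: left_diff_distrib[symmetric] abs_mult)
    ultimately show "\<bar>a m - b m\<bar> \<le> d m" unfolding d_def by (simp add: zg_diff)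
  qed
  have "\<bar>suminf (\<lambda>m. a m - b m)\<bar> \<le> suminf d"
    by (rule suminf_abs_bound[OF summable_diff[OF sa sb] sd bd])
  moreover have "suminf (\<lambda>m. a m - b m) = suminf a - suminf b" by (rule suminf_diff[OF sa sb, symmetric])
  ultimately have s1: "\<bar>suminf a - suminf b\<bar> \<le> suminf d" by simp
  have c: "\<bar>Cf P u y - Cf P u y'\<bar> \<le> \<gamma> u * \<theta>"
  proof -
    have "\<bar>Cf P u y - Cf P u y'\<bar> \<le> \<gamma> u * \<bar>y - y'\<bar>" using gamma u by auto
    also have "\<dots> \<le> \<gamma> u * \<theta>" using gamma u y y' by (intro mult_left_mono) (auto simp: zg_plus1)
    finally show ?thesis .
  qed
  have "Hf P \<theta> u y - Hf P \<theta> u y' = (Cf P u y - Cf P u y') + disc P * (suminf a - suminf b)"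
    unfolding a_def b_def by (simp add: Hf_step[OF u] algebra_simps)
  hence "\<bar>Hf P \<theta> u y - Hf P \<theta> u y'\<bar> \<le> \<bar>Cf P u y - Cf P u y'\<bar> + disc P * \<bar>suminf a - suminf b\<bar>"
    using alpha abs_triangle_ineq[of "Cf P u y - Cf P u y'" "disc P * (suminf a - suminf b)"] by (simp add: abs_mult)
  also have "\<dots> \<le> \<gamma> u * \<theta> + disc P * suminf d" using c s1 alpha by (intro add_mono mult_left_mono) auto
  finally show ?thesis unfolding ps .
qed


lemma base_props:
  defines "u \<equiv> hor P - 1"
  shows "PropN u \<and> PropM u \<and> PropQ u"
proof -
  have u: "u < hor P" using T2 by (simp add: u_def)
  let ?s = "sT P" and ?C = "Cf P u"
  have ph: "\<And>j. phibar P \<theta> \<gamma> u \<theta> (zg \<theta> j) = (if zg \<theta> j < ?s then 0 else \<gamma> u * \<theta>)"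
  proof -
    fix j
    have "phibar P \<theta> \<gamma> (hor P - 1) = (\<lambda>x y. if y < sT P then 0 else \<gamma> (hor P - 1) * x)"
      by (simp only: base_T)
    thus "phibar P \<theta> \<gamma> u \<theta> (zg \<theta> j) = (if zg \<theta> j < ?s then 0 else \<gamma> u * \<theta>)" unfolding u_def by simp
  qed
  have V: "\<And>y. Vf P \<theta> u y = ?C (max y ?s)"
  proof -
    fix y
    have "Vf P \<theta> (hor P - 1) y = Vfrom (Cf P (hor P - 1)) (Cm P (hor P - 1)) (sT P) (setupK P (hor P - 1)) y"
      unfolding Vf_def by (simp only: base_T)
    thus "Vf P \<theta> u y = ?C (max y ?s)" using sT_prop unfolding u_def Vfrom_def by (auto simp: max_def)
  qed
  have g: "0 \<le> \<gamma> u" "\<forall>a b. \<bar>?C a - ?C b\<bar> \<le> \<gamma> u * \<bar>a - b\<bar>" using gamma u by auto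
  have N: "PropN u" unfolding PropN_def ph using g th by auto
  have M: "PropM u"
  proof -
    have "\<And>j. zg \<theta> (j + 1) < ?s \<Longrightarrow> zg \<theta> j < ?s" using th by (simp add: zg_plus1)
    thus ?thesis unfolding PropM_def ph using g th by auto
  qed
  have Q: "PropQ u" unfolding PropQ_def
  proof (intro allI impI)
    fix j y y' assume c: "zg \<theta> (j - 1) \<le> y \<and> y \<le> zg \<theta> j \<and> zg \<theta> (j - 1) \<le> y' \<and> y' \<le> zg \<theta> j"
    have "\<bar>Vf P \<theta> u y - Vf P \<theta> u y'\<bar> \<le> \<gamma> u * \<bar>max y ?s - max y' ?s\<bar>" unfolding V using g by blast
    also have "\<dots> \<le> \<gamma> u * \<bar>y - y'\<bar>" using g by (intro mult_left_mono) (auto simp: max_def)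
    also have "\<dots> \<le> \<gamma> u * \<theta>" using g c by (intro mult_left_mono) (auto simp: zg_plus1)
    finally have a: "\<bar>Vf P \<theta> u y - Vf P \<theta> u y'\<bar> \<le> \<gamma> u * \<theta>" .
    show "\<bar>Vf P \<theta> u y - Vf P \<theta> u y'\<bar> \<le> phibar P \<theta> \<gamma> u \<theta> (zg \<theta> j)"
    proof (cases "zg \<theta> j < ?s")
      case True
      hence "max y ?s = ?s" "max y' ?s = ?s" using c by auto
      thus ?thesis unfolding V ph using True by simp
    next
      case False thus ?thesis unfolding ph using a by simp
    qed
  qed
  show ?thesis using N M Q by blast
qed

lemma step_props:
  assumes u: "Suc u < hor P" and IH: "PropN (Suc u) \<and> PropM (Suc u) \<and> PropQ (Suc u)"
  shows "PropN u \<and> PropM u \<and> PropQ u"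
proof -
  let ?s = "sv P \<theta> u" and ?H = "Hf P \<theta> u" and ?S = "Sv P \<theta> u" and ?K = "setupK P u"
  let ?ps = "psibar P \<theta> \<gamma> u \<theta>"
  obtain ms where s: "?s = zg \<theta> ms" "?H ?s \<le> ?H ?S + ?K"
    using s_prop[OF th Kpos Ccoer u] by metis
  have ph: "\<And>j. phibar P \<theta> \<gamma> u \<theta> (zg \<theta> j) = (if zg \<theta> j < ?s then 0 else ?ps (zg \<theta> j))"
  proof -
    fix j
    show "phibar P \<theta> \<gamma> u \<theta> (zg \<theta> j) = (if zg \<theta> j < ?s then 0 else ?ps (zg \<theta> j))"
    proof (cases "zg \<theta> j < ?s")
      case True thus ?thesis by (simp add: phibar_step[OF u] phifrom_def)
    next
      case False
      show ?thesis
      proof (cases "zg \<theta> j - \<theta> < ?s")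
        case True
        hence "zg \<theta> (j - 1) < zg \<theta> ms" "zg \<theta> ms \<le> zg \<theta> j" using False s(1) by (auto simp: zg_plus1)
        hence "j = ms" using th by (simp add: zg_less_iff zg_le_iff)
        thus ?thesis using False True s(1) by (simp add: phibar_step[OF u] phifrom_def)
      next
        case False2: False
        thus ?thesis using False by (simp add: phibar_step[OF u] phifrom_def)
      qed
    qed
  qed
  have pn: "\<And>j. 0 \<le> ?ps (zg \<theta> j)" using psi_nonneg[OF u] IH by blast
  have pm: "\<And>j. ?ps (zg \<theta> j) \<le> ?ps (zg \<theta> (j + 1))" using psi_mono[OF u] IH by blast
  have N: "PropN u" unfolding PropN_def ph using pn by auto
  have M: "PropM u"
  proof -
    have "\<And>j. zg \<theta> (j + 1) < ?s \<Longrightarrow> zg \<theta> j < ?s" using th by (simp add: zg_plus1)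
    thus ?thesis unfolding PropM_def ph using pn pm by (auto simp: not_less)
  qed
  have HC: "\<And>j y y'. zg \<theta> (j - 1) \<le> y \<Longrightarrow> y \<le> zg \<theta> j \<Longrightarrow> zg \<theta> (j - 1) \<le> y' \<Longrightarrow> y' \<le> zg \<theta> j
     \<Longrightarrow> \<bar>?H y - ?H y'\<bar> \<le> ?ps (zg \<theta> j)"
    using H_cell[OF u] IH by blast
  have mixed: "\<And>j y y'. zg \<theta> (j - 1) \<le> y \<Longrightarrow> y \<le> zg \<theta> j \<Longrightarrow> zg \<theta> (j - 1) \<le> y' \<Longrightarrow> y' \<le> zg \<theta> j
     \<Longrightarrow> y' < ?s \<Longrightarrow> \<not> y < ?s \<Longrightarrow> \<bar>Vf P \<theta> u y - Vf P \<theta> u y'\<bar> \<le> phibar P \<theta> \<gamma> u \<theta> (zg \<theta> j)"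
  proof -
    fix j y y' assume c: "zg \<theta> (j - 1) \<le> y" "y \<le> zg \<theta> j" "zg \<theta> (j - 1) \<le> y'" "y' \<le> zg \<theta> j"
      and m: "y' < ?s" "\<not> y < ?s"
    have "zg \<theta> (j - 1) < zg \<theta> ms" "zg \<theta> ms \<le> zg \<theta> j" using c m s(1) by auto
    hence "j = ms" using th by (simp add: zg_less_iff zg_le_iff)
    hence yj: "y = ?s" "?s = zg \<theta> j" using c m s(1) by auto
    have V: "Vf P \<theta> u y - Vf P \<theta> u y' = ?H ?s - (?H ?S + ?K)" using Vlow[OF m(1)] Vhigh[OF m(2)] yj(1) by simp
    have up: "?H ?S + ?K - ?H ?s \<le> ?ps (zg \<theta> j)"
    proof (cases "?K = 0")
      case True
      hence "?s = ?S" using sv_step[OF u] by simp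
      thus ?thesis using True pn by simp
    next
      case False
      have "?H ?S + ?K < ?H (?s - \<theta>)" using crux[OF th Kpos Ccoer u False] .
      moreover have "\<bar>?H (?s - \<theta>) - ?H ?s\<bar> \<le> ?ps (zg \<theta> j)"
        using HC[of j "?s - \<theta>" ?s] yj th by (simp add: zg_plus1)
      ultimately show ?thesis by linarith
    qed
    have "\<bar>Vf P \<theta> u y - Vf P \<theta> u y'\<bar> \<le> ?ps (zg \<theta> j)" unfolding V using up s(2) by linarith
    thus "\<bar>Vf P \<theta> u y - Vf P \<theta> u y'\<bar> \<le> phibar P \<theta> \<gamma> u \<theta> (zg \<theta> j)" unfolding ph using yj by simp
  qed
  have Q: "PropQ u" unfolding PropQ_def
  proof (intro allI impI)
    fix j y y' assume c: "zg \<theta> (j - 1) \<le> y \<and> y \<le> zg \<theta> j \<and> zg \<theta> (j - 1) \<le> y' \<and> y' \<le> zg \<theta> j"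
    show "\<bar>Vf P \<theta> u y - Vf P \<theta> u y'\<bar> \<le> phibar P \<theta> \<gamma> u \<theta> (zg \<theta> j)"
    proof (cases "y < ?s")
      case yl: True
      show ?thesis
      proof (cases "y' < ?s")
        case True
        thus ?thesis using yl N unfolding PropN_def by (simp add: Vlow)
      next
        case False
        thus ?thesis using mixed[of j y' y] c yl by (simp add: abs_minus_commute)
      qed
    next
      case yh: False
      show ?thesis
      proof (cases "y' < ?s")
        case True
        thus ?thesis using mixed[of j y y'] c yh by simp
      next
        case False
        have "?s \<le> zg \<theta> j" using yh c by auto
        hence "phibar P \<theta> \<gamma> u \<theta> (zg \<theta> j) = ?ps (zg \<theta> j)" unfolding ph by simp
        thus ?thesis using HC[of j y y'] c yh False by (simp add: Vhigh)
      qed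
    qed
  qed
  show ?thesis using N M Q by blast
qed

lemma all_props: "u < hor P \<Longrightarrow> PropN u \<and> PropM u \<and> PropQ u"
proof (induction "hor P - 1 - u" arbitrary: u)
  case 0
  hence "u = hor P - 1" by arith
  thus ?case using base_props by simp
next
  case (Suc k)
  hence u: "Suc u < hor P" by arith
  have "k = hor P - 1 - Suc u" using Suc.hyps(2) by arith
  hence "PropN (Suc u) \<and> PropM (Suc u) \<and> PropQ (Suc u)" using Suc.hyps(1) u by blast
  thus ?case by (rule step_props[OF u])
qed

end


context
  fixes M :: "'a measure" and D :: "'a \<Rightarrow> real" and \<theta> :: real
  assumes ps: "prob_space M" and Dm: "D \<in> borel_measurable M" and th: "0 < \<theta>"
begin

interpretation prob_space M by (rule ps)

lemma Dset_le: "{\<omega> \<in> space M. D \<omega> \<le> a} \<in> sets M"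
  using Dm borel_measurable_iff_le by blast

lemma F_lim: "(\<lambda>n. measure M {\<omega> \<in> space M. D \<omega> \<le> zg \<theta> (a + int n)}) \<longlonglongrightarrow> 1"
proof -
  let ?A = "\<lambda>n. {\<omega> \<in> space M. D \<omega> \<le> zg \<theta> (a + int n)}"
  have r: "range ?A \<subseteq> sets M" using Dset_le by auto
  have inc: "incseq ?A" unfolding incseq_def using th by (auto simp: zg_def intro: order_trans mult_right_mono)
  have un: "(\<Union>n. ?A n) = space M"
  proof
    show "space M \<subseteq> (\<Union>n. ?A n)"
    proof
      fix \<omega> assume w: "\<omega> \<in> space M"
      let ?n = "nat (\<lceil>D \<omega> / \<theta>\<rceil> - a)"
      have "D \<omega> \<le> real_of_int \<lceil>D \<omega> / \<theta>\<rceil> * \<theta>" by (rule ceil_mul[OF th])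
      also have "\<dots> \<le> zg \<theta> (a + int ?n)" unfolding zg_def using th by (intro mult_right_mono) auto
      finally show "\<omega> \<in> (\<Union>n. ?A n)" using w by blast
    qed
  qed auto
  have "(\<lambda>n. measure M (?A n)) \<longlonglongrightarrow> measure M (\<Union>n. ?A n)"
    by (rule finite_Lim_measure_incseq[OF r inc])
  thus ?thesis unfolding un using prob_space by simp
qed

lemma tail_sums:
  "(\<lambda>n. measure M {\<omega> \<in> space M. D \<omega> \<le> zg \<theta> (a + int n + 1)} - measure M {\<omega> \<in> space M. D \<omega> \<le> zg \<theta> (a + int n)})
     sums (1 - measure M {\<omega> \<in> space M. D \<omega> \<le> zg \<theta> a})"
proof -
  define G where "G n = measure M {\<omega> \<in> space M. D \<omega> \<le> zg \<theta> (a + int n)}" for n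
  have "(\<lambda>n. G (Suc n) - G n) sums (1 - G 0)"
    unfolding sums_def sum_lessThan_telescope
    by (intro tendsto_diff tendsto_const) (use F_lim in \<open>simp add: G_def\<close>)
  moreover have "\<And>n. G (Suc n) = measure M {\<omega> \<in> space M. D \<omega> \<le> zg \<theta> (a + int n + 1)}"
    by (simp add: G_def algebra_simps)
  ultimately show ?thesis by (simp add: G_def)
qed

lemma Eset: "{\<omega> \<in> space M. zg \<theta> k < D \<omega> \<and> D \<omega> \<le> zg \<theta> (k + 1)} \<in> sets M"
  using Dm by measurable

lemma Tset: "{\<omega> \<in> space M. zg \<theta> a < D \<omega>} \<in> sets M"
  using Dm by measurable

lemma E_meas: "measure M {\<omega> \<in> space M. zg \<theta> k < D \<omega> \<and> D \<omega> \<le> zg \<theta> (k + 1)} =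
   measure M {\<omega> \<in> space M. D \<omega> \<le> zg \<theta> (k + 1)} - measure M {\<omega> \<in> space M. D \<omega> \<le> zg \<theta> k}"
proof -
  have "{\<omega> \<in> space M. zg \<theta> k < D \<omega> \<and> D \<omega> \<le> zg \<theta> (k + 1)} =
     {\<omega> \<in> space M. D \<omega> \<le> zg \<theta> (k + 1)} - {\<omega> \<in> space M. D \<omega> \<le> zg \<theta> k}" by auto
  moreover have "{\<omega> \<in> space M. D \<omega> \<le> zg \<theta> k} \<subseteq> {\<omega> \<in> space M. D \<omega> \<le> zg \<theta> (k + 1)}"
    using th by (auto simp: zg_plus1)
  ultimately show ?thesis using Dset_le by (simp add: finite_measure_Diff)
qed

lemma T_meas: "measure M {\<omega> \<in> space M. zg \<theta> a < D \<omega>} = 1 - measure M {\<omega> \<in> space M. D \<omega> \<le> zg \<theta> a}"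
proof -
  have "{\<omega> \<in> space M. zg \<theta> a < D \<omega>} = space M - {\<omega> \<in> space M. D \<omega> \<le> zg \<theta> a}" by auto
  thus ?thesis using prob_compl[OF Dset_le] by simp
qed


lemma ind_int: "A \<in> sets M \<Longrightarrow> integrable M (\<lambda>\<omega>. indicator A \<omega> * c) \<and> (\<integral>\<omega>. indicator A \<omega> * c \<partial>M) = measure M A * c"
proof -
  assume A: "A \<in> sets M"
  have "integrable M (indicator A :: 'a \<Rightarrow> real)"
    using A by (intro integrable_real_indicator) (auto simp: less_top[symmetric])
  moreover have "A \<inter> space M = A" using A sets.sets_into_space by auto
  ultimately show ?thesis by simp
qed

end

lemma sum_single:
  fixes h :: "int \<Rightarrow> real"
  assumes "finite S" "k0 \<in> S"
  shows "(\<Sum>j\<in>S. (if j = k0 then 1 else 0) * h j) = h k0"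
proof -
  have "(\<Sum>j\<in>S. (if j = k0 then 1 else 0) * h j) = (\<Sum>j\<in>S. if j = k0 then h j else 0)"
    by (rule sum.cong) auto
  also have "\<dots> = h k0" using assms by simp
  finally show ?thesis .
qed

lemma key_bound:
  fixes V :: "real \<Rightarrow> real" and \<phi> :: "int \<Rightarrow> real"
  assumes th: "0 < \<theta>"
    and N: "\<forall>j. 0 \<le> \<phi> j" and Mo: "\<forall>j. \<phi> j \<le> \<phi> (j + 1)"
    and Q: "\<forall>j y y'. zg \<theta> (j - 1) \<le> y \<and> y \<le> zg \<theta> j \<and> zg \<theta> (j - 1) \<le> y' \<and> y' \<le> zg \<theta> j
      \<longrightarrow> \<bar>V y - V y'\<bar> \<le> \<phi> j"
    and x: "zg \<theta> (j - 1) < y" "y \<le> zg \<theta> j" and w: "zg \<theta> (j - 2) \<le> w" "w \<le> y"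
  shows "V w - V y \<le> 2 * \<phi> j"
proof (cases "zg \<theta> (j - 1) \<le> w")
  case True
  hence "\<bar>V w - V y\<bar> \<le> \<phi> j" using Q x w by auto
  thus ?thesis using N by (smt (verit))
next
  case False
  have e: "j - 1 - 1 = j - 2" by simp
  have "\<bar>V w - V (zg \<theta> (j - 1))\<bar> \<le> \<phi> (j - 1)" using Q False w e by force
  moreover have "\<phi> (j - 1) \<le> \<phi> j" using Mo[rule_format, of "j - 1"] by simp
  moreover have "\<bar>V (zg \<theta> (j - 1)) - V y\<bar> \<le> \<phi> j" using Q x th by (auto simp: zg_plus1)
  ultimately show ?thesis by linarith
qed


theorem lemma4p11:
  fixes P :: "'a invmodel" and \<theta> :: real and \<gamma> :: "nat \<Rightarrow> real"
    and t :: nat and x :: real and k :: int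
  assumes T2: "2 \<le> hor P"
    and alpha: "0 < disc P" "disc P \<le> 1"
    and Kpos: "\<forall>i < hor P. 0 \<le> setupK P i"
    and ps: "prob_space (pspace P)"
    and Dmeas: "\<forall>i < hor P. dem P i \<in> borel_measurable (pspace P)"
    and Dindep: "prob_space.indep_vars (pspace P) (\<lambda>_. borel) (dem P) {..<hor P}"
    and Dnonneg: "\<forall>i < hor P. \<forall>\<omega> \<in> space (pspace P). 0 \<le> dem P i \<omega>"
    and Dmean: "\<forall>i < hor P. integrable (pspace P) (dem P i)"
    and Cconv: "\<forall>i < hor P. convex_on UNIV (Cf P i)"
    and Ccoer: "\<forall>i < hor P. filterlim (Cf P i) at_top at_infinity"
    and Kdec: "\<forall>i. Suc i < hor P \<longrightarrow> disc P * setupK P (Suc i) \<le> setupK P i"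
    and theta: "0 < \<theta>"
    and Vint: "\<forall>i y. 1 \<le> i \<and> i < hor P \<longrightarrow>
                 integrable (pspace P) (\<lambda>\<omega>. Vf P \<theta> i (y - dem P (i - 1) \<omega>))"
    and Vsum: "\<forall>i y. 1 \<le> i \<and> i < hor P \<longrightarrow>
                 summable (\<lambda>m. Vf P \<theta> i (y - zg \<theta> (int m - 1)) * fg P \<theta> (i - 1) (int m - 1))"
    and gamma: "\<forall>i < hor P. 0 \<le> \<gamma> i \<and> (\<forall>u v. \<bar>Cf P i u - Cf P i v\<bar> \<le> \<gamma> i * \<bar>u - v\<bar>)"
    and tT: "t + 2 \<le> hor P"
    and xk: "zg \<theta> (k - 1) < x" "x \<le> zg \<theta> k"
  shows "disc P * Af P \<theta> (Suc t) x \<le> 2 * psibar P \<theta> \<gamma> t \<theta> (zg \<theta> k) - 2 * \<gamma> t * \<theta>"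
proof -
  have u: "Suc t < hor P" using tT by simp
  have t: "t < hor P" using tT by simp
  note th = theta
  let ?M = "pspace P" and ?D = "dem P t" and ?V = "Vf P \<theta> (Suc t)" and ?s = "sv P \<theta> (Suc t)"
  let ?c = "Hf P \<theta> (Suc t) (Sv P \<theta> (Suc t)) + setupK P (Suc t)"
  let ?f = "fg P \<theta> t" and ?ph = "\<lambda>j. phibar P \<theta> \<gamma> (Suc t) \<theta> (zg \<theta> j)"
  let ?F = "\<lambda>y. measure ?M {\<omega> \<in> space ?M. ?D \<omega> \<le> y}"
  interpret prob_space ?M by (rule ps)
  have Dm: "?D \<in> borel_measurable ?M" using Dmeas t by auto
  have PR: "PropN P \<theta> \<gamma> (Suc t) \<and> PropM P \<theta> \<gamma> (Suc t) \<and> PropQ P \<theta> \<gamma> (Suc t)"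
    by (rule all_props[OF th alpha(1) alpha(2) T2 Kpos ps Dmeas Cconv Ccoer gamma Vsum u])
  note ctx = th alpha(1) alpha(2) T2 Kpos ps Dmeas Cconv Ccoer gamma Vsum
  have PN: "\<forall>j. 0 \<le> ?ph j" using PR unfolding PropN_def[OF ctx] by blast
  have PM: "\<forall>j. ?ph j \<le> ?ph (j + 1)" using PR unfolding PropM_def[OF ctx] by blast
  have PQ: "\<forall>j y y'. zg \<theta> (j - 1) \<le> y \<and> y \<le> zg \<theta> j \<and> zg \<theta> (j - 1) \<le> y' \<and> y' \<le> zg \<theta> j
      \<longrightarrow> \<bar>?V y - ?V y'\<bar> \<le> ?ph j" using PR unfolding PropQ_def[OF ctx] by blast
  obtain L where L: "-2 \<le> L" "\<forall>m. L < m \<longrightarrow> zg \<theta> k - zg \<theta> m < ?s"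
    using L_choice[OF th] by blast
  have hx: "\<And>m. L < m \<Longrightarrow> x - zg \<theta> m < ?s" using L(2) xk(2) by force
  have psi: "psibar P \<theta> \<gamma> t \<theta> (zg \<theta> k) = \<gamma> t * \<theta> +
       disc P * (\<Sum>m\<in>{-1..L}. phibar P \<theta> \<gamma> (Suc t) \<theta> (zg \<theta> k - zg \<theta> m) * ?f m)"
    by (rule psi_sum[OF th u L(1)]) (use L(2) in auto)
  have Vc: "\<And>y. y < ?s \<Longrightarrow> ?V y = ?c" by (rule Vf_low[OF th Kpos Ccoer])
  have fgF: "\<And>m. ?f m = ?F (zg \<theta> (m + 1)) - ?F (zg \<theta> m)" by (simp add: fg_def Fd_def)
  define a where "a m = ?V (x - zg \<theta> (int m - 1)) * ?f (int m - 1)" for m :: nat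
  have sa: "summable a"
  proof -
    have "1 \<le> Suc t \<and> Suc t < hor P" using u by simp
    hence "summable (\<lambda>m. ?V (x - zg \<theta> (int m - 1)) * fg P \<theta> (Suc t - 1) (int m - 1))"
      using Vsum by blast
    thus ?thesis unfolding a_def by simp
  qed
  define n0 where "n0 = nat (L + 2)"
  have n0: "int n0 = L + 2" using L(1) by (simp add: n0_def)
  have tail: "(\<lambda>n. a (n + n0)) sums (?c * (1 - ?F (zg \<theta> (L + 1))))"
  proof -
    have "\<And>n. a (n + n0) = ?c * (?F (zg \<theta> ((L + 1) + int n + 1)) - ?F (zg \<theta> ((L + 1) + int n)))"
    proof -
      fix n
      have e: "int (n + n0) - 1 = (L + 1) + int n" using n0 by simp
      have "x - zg \<theta> ((L + 1) + int n) < ?s" by (rule hx) simp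
      thus "a (n + n0) = ?c * (?F (zg \<theta> ((L + 1) + int n + 1)) - ?F (zg \<theta> ((L + 1) + int n)))"
        unfolding a_def e using Vc fgF by simp
    qed
    moreover have "(\<lambda>n. ?c * (?F (zg \<theta> ((L + 1) + int n + 1)) - ?F (zg \<theta> ((L + 1) + int n))))
        sums (?c * (1 - ?F (zg \<theta> (L + 1))))"
      by (rule sums_mult[OF tail_sums[OF ps Dm th]])
    ultimately show ?thesis by simp
  qed
  have head: "(\<Sum>i<n0. a i) = (\<Sum>j\<in>{-1..L}. ?V (x - zg \<theta> j) * ?f j)"
    unfolding a_def reindex_nat_int[of "\<lambda>j. ?V (x - zg \<theta> j) * ?f j"] using n0 by simp
  have ser: "suminf a = (\<Sum>j\<in>{-1..L}. ?V (x - zg \<theta> j) * ?f j) + ?c * (1 - ?F (zg \<theta> (L + 1)))"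
    using suminf_split_initial_segment[OF sa, of n0] sums_unique[OF tail] head by simp
  define E where "E j = {\<omega> \<in> space ?M. zg \<theta> j < ?D \<omega> \<and> ?D \<omega> \<le> zg \<theta> (j + 1)}" for j
  define T where "T = {\<omega> \<in> space ?M. zg \<theta> (L + 1) < ?D \<omega>}"
  have Es: "\<And>j. E j \<in> sets ?M" unfolding E_def by (rule Eset[OF ps Dm th])
  have Ts: "T \<in> sets ?M" unfolding T_def by (rule Tset[OF ps Dm th])
  have Em: "\<And>j. measure ?M (E j) = ?f j" unfolding E_def fgF by (rule E_meas[OF ps Dm th])
  have Tm: "measure ?M T = 1 - ?F (zg \<theta> (L + 1))" unfolding T_def by (rule T_meas[OF ps Dm th])
  define g where "g \<omega> = ?V (x - ?D \<omega>)" for \<omega>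
  define r where "r \<omega> = (\<Sum>j\<in>{-1..L}. indicator (E j) \<omega> * ?V (x - zg \<theta> j)) + indicator T \<omega> * ?c" for \<omega>
  define b where "b \<omega> = (\<Sum>j\<in>{-1..L}. indicator (E j) \<omega> * (2 * ?ph (k - j)))" for \<omega>
  have gi: "integrable ?M g"
  proof -
    have "1 \<le> Suc t \<and> Suc t < hor P" using u by simp
    hence "integrable ?M (\<lambda>\<omega>. ?V (x - dem P (Suc t - 1) \<omega>))" using Vint by blast
    thus ?thesis unfolding g_def by simp
  qed
  have ri: "integrable ?M r" and rv: "integral\<^sup>L ?M r = suminf a"
  proof -
    have i1: "\<And>j. integrable ?M (\<lambda>\<omega>. indicator (E j) \<omega> * ?V (x - zg \<theta> j))"
      using ind_int[OF ps Dm th Es] by blast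
    have i2: "integrable ?M (\<lambda>\<omega>. indicator T \<omega> * ?c)" using ind_int[OF ps Dm th Ts] by blast
    show "integrable ?M r" unfolding r_def using i1 i2 by (intro Bochner_Integration.integrable_add Bochner_Integration.integrable_sum) auto
    have isum: "integrable ?M (\<lambda>\<omega>. \<Sum>j\<in>{-1..L}. indicator (E j) \<omega> * ?V (x - zg \<theta> j))"
      by (intro Bochner_Integration.integrable_sum) (use i1 in auto)
    have "integral\<^sup>L ?M r = integral\<^sup>L ?M (\<lambda>\<omega>. \<Sum>j\<in>{-1..L}. indicator (E j) \<omega> * ?V (x - zg \<theta> j))
          + integral\<^sup>L ?M (\<lambda>\<omega>. indicator T \<omega> * ?c)"
      unfolding r_def by (rule Bochner_Integration.integral_add[OF isum i2])
    also have "integral\<^sup>L ?M (\<lambda>\<omega>. \<Sum>j\<in>{-1..L}. indicator (E j) \<omega> * ?V (x - zg \<theta> j))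
        = (\<Sum>j\<in>{-1..L}. integral\<^sup>L ?M (\<lambda>\<omega>. indicator (E j) \<omega> * ?V (x - zg \<theta> j)))"
      by (rule Bochner_Integration.integral_sum) (use i1 in auto)
    also have "\<dots> = (\<Sum>j\<in>{-1..L}. ?V (x - zg \<theta> j) * ?f j)"
    proof (rule sum.cong[OF refl])
      fix j show "integral\<^sup>L ?M (\<lambda>\<omega>. indicator (E j) \<omega> * ?V (x - zg \<theta> j)) = ?V (x - zg \<theta> j) * ?f j"
        using ind_int[OF ps Dm th Es[of j], of "?V (x - zg \<theta> j)"] Em[of j] by simp
    qed
    also have "integral\<^sup>L ?M (\<lambda>\<omega>. indicator T \<omega> * ?c) = ?c * (1 - ?F (zg \<theta> (L + 1)))"
      using ind_int[OF ps Dm th Ts, of ?c] Tm by simp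
    finally show "integral\<^sup>L ?M r = suminf a" using ser by simp
  qed
  have bi: "integrable ?M b" and bv: "integral\<^sup>L ?M b = (\<Sum>j\<in>{-1..L}. 2 * ?ph (k - j) * ?f j)"
  proof -
    have i1: "\<And>j. integrable ?M (\<lambda>\<omega>. indicator (E j) \<omega> * (2 * ?ph (k - j)))"
      using ind_int[OF ps Dm th Es] by blast
    show "integrable ?M b" unfolding b_def using i1 by (intro Bochner_Integration.integrable_sum) auto
    have "integral\<^sup>L ?M b = (\<Sum>j\<in>{-1..L}. integral\<^sup>L ?M (\<lambda>\<omega>. indicator (E j) \<omega> * (2 * ?ph (k - j))))"
      unfolding b_def by (rule Bochner_Integration.integral_sum) (use i1 in auto)
    also have "\<dots> = (\<Sum>j\<in>{-1..L}. 2 * ?ph (k - j) * ?f j)"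
    proof (rule sum.cong[OF refl])
      fix j show "integral\<^sup>L ?M (\<lambda>\<omega>. indicator (E j) \<omega> * (2 * ?ph (k - j))) = 2 * ?ph (k - j) * ?f j"
        using ind_int[OF ps Dm th Es[of j], of "2 * ?ph (k - j)"] Em[of j] by simp
    qed
    finally show "integral\<^sup>L ?M b = (\<Sum>j\<in>{-1..L}. 2 * ?ph (k - j) * ?f j)" .
  qed
  have pw: "\<And>\<omega>. \<omega> \<in> space ?M \<Longrightarrow> g \<omega> - r \<omega> \<le> b \<omega>"
  proof -
    fix \<omega> assume w: "\<omega> \<in> space ?M"
    have D0: "0 \<le> ?D \<omega>" using Dnonneg t w by auto
    show "g \<omega> - r \<omega> \<le> b \<omega>"
    proof (cases "zg \<theta> (L + 1) < ?D \<omega>")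
      case True
      have nE: "\<And>j. j \<in> {-1..L} \<Longrightarrow> indicator (E j) \<omega> = (0::real)"
      proof -
        fix j assume "j \<in> {-1..L}"
        hence "zg \<theta> (j + 1) \<le> zg \<theta> (L + 1)" using th by (simp add: zg_le_iff)
        thus "indicator (E j) \<omega> = (0::real)" using True unfolding E_def by (auto simp: indicator_def)
      qed
      have "indicator T \<omega> = (1::real)" using True w unfolding T_def by (simp add: indicator_def)
      moreover have "x - ?D \<omega> < ?s" using hx[of "L + 1"] True by simp
      ultimately have "g \<omega> = r \<omega>" "b \<omega> = 0" unfolding g_def r_def b_def using nE Vc by simp_all
      thus ?thesis by simp
    next
      case False
      define k0 where "k0 = \<lceil>?D \<omega> / \<theta>\<rceil> - 1"
      have k0a: "?D \<omega> \<le> zg \<theta> (k0 + 1)" using ceil_mul[OF th, of "?D \<omega>"] by (simp add: k0_def zg_def)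
      have k0b: "zg \<theta> k0 < ?D \<omega>"
      proof -
        have "real_of_int \<lceil>?D \<omega> / \<theta>\<rceil> - 1 < ?D \<omega> / \<theta>" by linarith
        hence "(real_of_int \<lceil>?D \<omega> / \<theta>\<rceil> - 1) * \<theta> < ?D \<omega> / \<theta> * \<theta>" using th by (rule mult_strict_right_mono)
        thus ?thesis using th by (simp add: k0_def zg_def)
      qed
      have k0r: "k0 \<in> {-1..L}"
      proof -
        have "0 \<le> ?D \<omega> / \<theta>" using D0 th by simp
        hence "-1 \<le> k0" unfolding k0_def by linarith
        moreover have "zg \<theta> k0 < zg \<theta> (L + 1)" using k0b False by simp
        hence "k0 < L + 1" using th by (simp add: zg_less_iff)
        ultimately show ?thesis by simp
      qed
      have indE: "\<And>j. indicator (E j) \<omega> = (if j = k0 then 1 else (0::real))"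
      proof -
        fix j
        have "\<omega> \<in> E j \<longleftrightarrow> j = k0"
        proof
          assume "\<omega> \<in> E j"
          hence "zg \<theta> j < zg \<theta> (k0 + 1)" "zg \<theta> k0 < zg \<theta> (j + 1)" using k0a k0b unfolding E_def by auto
          thus "j = k0" using th by (simp add: zg_less_iff)
        qed (use k0a k0b w in \<open>auto simp: E_def\<close>)
        thus "indicator (E j) \<omega> = (if j = k0 then 1 else (0::real))" by (simp add: indicator_def)
      qed
      have "indicator T \<omega> = (0::real)" using False unfolding T_def by (simp add: indicator_def)
      hence rw: "r \<omega> = ?V (x - zg \<theta> k0)" unfolding r_def indE
        using sum_single[OF finite_atLeastAtMost_int k0r, of "\<lambda>j. ?V (x - zg \<theta> j)"] by simp
      have bw: "b \<omega> = 2 * ?ph (k - k0)" unfolding b_def indE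
        using sum_single[OF finite_atLeastAtMost_int k0r, of "\<lambda>j. 2 * ?ph (k - j)"] by simp
      have "?V (x - ?D \<omega>) - ?V (x - zg \<theta> k0) \<le> 2 * ?ph (k - k0)"
      proof (rule key_bound[OF th PN PM PQ])
        show "zg \<theta> (k - k0 - 1) < x - zg \<theta> k0" using xk(1) by (simp add: zg_diff)
        show "x - zg \<theta> k0 \<le> zg \<theta> (k - k0)" using xk(2) by (simp add: zg_diff)
        show "x - ?D \<omega> \<le> x - zg \<theta> k0" using k0b by simp
        have "zg \<theta> (k - k0 - 2) = zg \<theta> (k - 1) - zg \<theta> (k0 + 1)" by (simp add: zg_def algebra_simps)
        thus "zg \<theta> (k - k0 - 2) \<le> x - ?D \<omega>" using xk(1) k0a by simp
      qed
      thus ?thesis unfolding g_def rw bw .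
    qed
  qed
  have Af: "Af P \<theta> (Suc t) x = integral\<^sup>L ?M g - suminf a"
    unfolding Af_def g_def a_def by simp
  also have "\<dots> = integral\<^sup>L ?M (\<lambda>\<omega>. g \<omega> - r \<omega>)" using gi ri rv by simp
  also have "\<dots> \<le> integral\<^sup>L ?M b" using gi ri bi pw by (intro integral_mono) auto
  finally have A: "Af P \<theta> (Suc t) x \<le> (\<Sum>j\<in>{-1..L}. 2 * ?ph (k - j) * ?f j)" using bv by simp
  have "(\<Sum>j\<in>{-1..L}. 2 * ?ph (k - j) * ?f j) =
        2 * (\<Sum>m\<in>{-1..L}. phibar P \<theta> \<gamma> (Suc t) \<theta> (zg \<theta> k - zg \<theta> m) * ?f m)"
    by (simp add: sum_distrib_left zg_diff mult.assoc)
  hence "disc P * Af P \<theta> (Suc t) x \<le> disc P * (2 * (\<Sum>m\<in>{-1..L}. phibar P \<theta> \<gamma> (Suc t) \<theta> (zg \<theta> k - zg \<theta> m) * ?f m))"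
    using A alpha by (intro mult_left_mono) auto
  thus ?thesis unfolding psi by (simp add: algebra_simps)
qed



end
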